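(* Let $E$ be a separable metric space, $\mu$ a probability measure on $\mathcal{B}(E)$, and $S : E \to E$ Borel measurable. Let $\Pi \subset \mathcal{B}(E)$ be a $\pi$-system such that $\sigma(\Pi) = \mathcal{B}(E)$. Assume that 1. for every $A, B \in \Pi$, $$\lim_{k\to\infty}\sup_{i \in \mathbb{N}} \left|\mu(S^{-i}A \cap S^{-k}S^{-i}B) - \mu(S^{-i}A)\,\mu(S^{-k}S^{-i}B)\right| = 0,$$ and 2. $(E, \mathcal{B}(E), \mu, S)$ is asymptotically stationary with stationary limit $\nu$. For every $n \in \mathbb{N}$ define $\mu_n : \mathcal{B}(E^n) \to [0,1]$ by $$\mu_n(A) = \frac{1}{n!} \sum_{\sigma \in \Sigma_n} \mu\{x \in E : (S^{\sigma(1)}(x), \dots, S^{\sigma(n)}(x)) \in A\}.$$ Then $(\mu_n)_{n \in \mathbb{N}}$ is $\nu$-chaotic.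
   Context: $\mathcal{B}(E)$ is the Borel $\sigma$-algebra. $S^k$ is the $k$-fold composition of $S$, $S^{-k}A=(S^k)^{-1}(A)$; $\Sigma_n$ is the set of permutations of $\{1,\dots,n\}$; $\mathbb{N}=\{1,2,\dots\}$. $(E,\mathcal{B}(E),\mu,S)$ is asymptotically stationary with stationary limit $\nu$ if $\nu(A)=\lim_{k\to\infty}\mu(S^{-k}A)$ exists for every $A\in\mathcal{B}(E)$. $C_b(E)$ denotes bounded continuous scalar-valued functions on $E$. A Borel probability measure $\mu_n$ on $E^n$ is symmetric if $\int_{E^n}\phi_1(x_1)\cdots\phi_n(x_n)\,d\mu_n = \int_{E^n}\phi_1(x_{\pi(1)})\cdots\phi_n(x_{\pi(n)})\,d\mu_n$ for all $\phi_i\in C_b(E)$ and all permutations $\pi$. A sequence of symmetric Borel probability measures $\mu_n$ on $E^n$ is $\nu$-chaotic if for all $k\ge1$ and $\phi_1,\dots,\phi_k\in C_b(E)$, $\lim_{n\to\infty}\int_{E^n}\phi_1(x_1)\cdots\phi_k(x_k)\,d\mu_n=\prod_{j=1}^k\int_E\phi_j\,d\nu$. *)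

theory Defs
  imports "HOL-Probability.Probability"
begin

definition asymptotically_stationary ::
    "'a::topological_space measure \<Rightarrow> ('a \<Rightarrow> 'a) \<Rightarrow> 'a measure \<Rightarrow> bool" where
  "asymptotically_stationary \<mu> S \<nu> \<longleftrightarrow>
     sets \<nu> = sets borel \<and>
     (\<forall>A \<in> sets borel. (\<lambda>k. emeasure \<mu> ((S ^^ k) -` A)) \<longlonglongrightarrow> emeasure \<nu> A)"

definition bcont :: "('a::topological_space \<Rightarrow> real) \<Rightarrow> bool" where
  "bcont \<phi> \<longleftrightarrow> continuous_on UNIV \<phi> \<and> bounded (range \<phi>)"

definition Epow :: "nat \<Rightarrow> (nat \<Rightarrow> 'a::topological_space) measure" where
  "Epow n = PiM {1..n} (\<lambda>_. borel)"

definition symmetric_meas :: "nat \<Rightarrow> (nat \<Rightarrow> 'a::topological_space) measure \<Rightarrow> bool" where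
  "symmetric_meas n m \<longleftrightarrow>
     sets m = sets (Epow n) \<and> prob_space m \<and>
     (\<forall>\<phi> :: nat \<Rightarrow> 'a \<Rightarrow> real. \<forall>\<pi>. (\<forall>i. bcont (\<phi> i)) \<and> \<pi> permutes {1..n} \<longrightarrow>
        (\<integral>x. (\<Prod>i\<in>{1..n}. \<phi> i (x i)) \<partial>m) = (\<integral>x. (\<Prod>i\<in>{1..n}. \<phi> i (x (\<pi> i))) \<partial>m))"

text \<open>nu-chaotic sequence (indexed by n \<ge> 1; the value at n = 0 is irrelevant).\<close>
definition chaotic :: "(nat \<Rightarrow> (nat \<Rightarrow> 'a::topological_space) measure) \<Rightarrow> 'a measure \<Rightarrow> bool" where
  "chaotic ms \<nu> \<longleftrightarrow>
     (\<forall>n\<ge>1. symmetric_meas n (ms n)) \<and>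
     (\<forall>k\<ge>1. \<forall>\<phi> :: nat \<Rightarrow> 'a \<Rightarrow> real. (\<forall>j. bcont (\<phi> j)) \<longrightarrow>
        (\<lambda>n. \<integral>x. (\<Prod>j\<in>{1..k}. \<phi> j (x j)) \<partial>ms n) \<longlonglongrightarrow> (\<Prod>j\<in>{1..k}. \<integral>y. \<phi> j y \<partial>\<nu>))"

definition mu_n :: "'a::topological_space measure \<Rightarrow> ('a \<Rightarrow> 'a) \<Rightarrow> nat \<Rightarrow> (nat \<Rightarrow> 'a) measure" where
  "mu_n \<mu> S n = measure_of (space (Epow n)) (sets (Epow n))
     (\<lambda>A. ennreal (1 / fact n) *
        (\<Sum>\<sigma>\<in>{\<sigma>. \<sigma> permutes {1..n}}.
           emeasure \<mu> {x \<in> space \<mu>. (\<lambda>j\<in>{1..n}. (S ^^ \<sigma> j) x) \<in> A}))"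

end

theory Submission
  imports Defs
begin


lemma cesaro:
  fixes X :: "nat \<Rightarrow> real"
  assumes "X \<longlonglongrightarrow> c"
  shows "(\<lambda>n. (\<Sum>a\<in>{1..n}. X a) / n) \<longlonglongrightarrow> c"
proof (rule LIMSEQ_I)
  fix r :: real assume r: "r > 0"
  obtain N where N: "\<And>a. a \<ge> N \<Longrightarrow> \<bar>X a - c\<bar> < r/2"
    using LIMSEQ_D[OF assms, of "r/2"] r by auto
  define K where "K = (\<Sum>a\<in>{1..N}. \<bar>X a - c\<bar>)"
  have K0: "K \<ge> 0" unfolding K_def by (intro sum_nonneg) auto
  obtain N2 :: nat where N2: "real N2 > 2 * K / r" using reals_Archimedean2 by blast
  show "\<exists>no. \<forall>n\<ge>no. norm ((\<Sum>a\<in>{1..n}. X a) / real n - c) < r"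
  proof (intro exI allI impI)
    fix n assume n: "n \<ge> max (Suc N) (Suc N2)"
    have npos: "real n > 0" using n by auto
    have e1: "(\<Sum>a\<in>{1..n}. X a) / real n - c = (\<Sum>a\<in>{1..n}. X a - c) / real n"
      using npos by (simp add: sum_subtractf field_simps)
    have e2: "{1..n} = {1..N} \<union> {Suc N..n}" using n by auto
    have "(\<Sum>a\<in>{1..N} \<union> {Suc N..n}. X a - c) = (\<Sum>a\<in>{1..N}. X a - c) + (\<Sum>a\<in>{Suc N..n}. X a - c)"
      by (rule sum.union_disjoint) auto
    then have eq: "(\<Sum>a\<in>{1..n}. X a) / real n - c = ((\<Sum>a\<in>{1..N}. X a - c) + (\<Sum>a\<in>{Suc N..n}. X a - c)) / real n" using e1 e2 by simp
    have b1: "\<bar>\<Sum>a\<in>{1..N}. X a - c\<bar> \<le> K" unfolding K_def by (rule sum_abs)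
    have "\<bar>\<Sum>a\<in>{Suc N..n}. X a - c\<bar> \<le> (\<Sum>a\<in>{Suc N..n}. \<bar>X a - c\<bar>)" by (rule sum_abs)
    also have "\<dots> \<le> (\<Sum>a\<in>{Suc N..n}. r/2)" proof (intro sum_mono)
      fix a assume "a \<in> {Suc N..n}" then show "\<bar>X a - c\<bar> \<le> r/2" using N[of a] by auto
    qed
    also have "\<dots> \<le> real n * (r/2)" using r by simp
    finally have b2: "\<bar>\<Sum>a\<in>{Suc N..n}. X a - c\<bar> \<le> real n * (r/2)" .
    have "real N2 < real n" using n by simp
    then have "2 * K / r < real n" using N2 by linarith
    then have "2 * K < real n * r" using r by (simp add: pos_divide_less_eq)
    then have "K < real n * (r/2)" by simp
    then have "\<bar>(\<Sum>a\<in>{1..N}. X a - c) + (\<Sum>a\<in>{Suc N..n}. X a - c)\<bar> < real n * r"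
      using b1 b2 by linarith
    then show "norm ((\<Sum>a\<in>{1..n}. X a) / real n - c) < r"
      unfolding eq using npos by (simp add: abs_divide field_simps)
  qed
qed




definition bb :: "('a::topological_space \<Rightarrow> real) \<Rightarrow> bool" where
  "bb f \<longleftrightarrow> f \<in> borel_measurable borel \<and> (\<exists>B. \<forall>x. \<bar>f x\<bar> \<le> B)"

lemma bb_indicator: "A \<in> sets borel \<Longrightarrow> bb (indicator A)"
  unfolding bb_def by (auto intro!: exI[of _ 1] simp: indicator_def)

lemma bb_lin: "bb f \<Longrightarrow> bb g \<Longrightarrow> bb (\<lambda>x. c * f x + g x)"
proof -
  assume f: "bb f" and g: "bb g"
  then obtain B1 B2 where b: "\<forall>x. \<bar>f x\<bar> \<le> B1" "\<forall>x. \<bar>g x\<bar> \<le> B2" unfolding bb_def by blast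
  have "\<bar>c * f x + g x\<bar> \<le> \<bar>c\<bar> * B1 + B2" for x
  proof -
    have "\<bar>c * f x + g x\<bar> \<le> \<bar>c\<bar> * \<bar>f x\<bar> + \<bar>g x\<bar>" by (simp add: abs_mult[symmetric] abs_triangle_ineq)
    also have "\<dots> \<le> \<bar>c\<bar> * B1 + B2" using b by (intro add_mono mult_left_mono) auto
    finally show ?thesis .
  qed
  then show ?thesis using f g unfolding bb_def by auto
qed

lemma bb_const: "bb (\<lambda>x. c)" unfolding bb_def by auto

lemma bb_scale: "bb f \<Longrightarrow> bb (\<lambda>x. c * f x)"
  using bb_lin[of f "\<lambda>x. 0" c] bb_const[of 0] by simp

lemma bb_sum: "finite Z \<Longrightarrow> (\<And>z. z \<in> Z \<Longrightarrow> bb (h z)) \<Longrightarrow> bb (\<lambda>x. \<Sum>z\<in>Z. h z x)"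
proof (induction Z rule: finite_induct)
  case empty then show ?case using bb_const[of 0] by simp
next
  case (insert z Z)
  then show ?case using bb_lin[of "h z" "\<lambda>x. \<Sum>z\<in>Z. h z x" 1] by simp
qed

lemma approx_lemma:
  fixes L :: "nat \<Rightarrow> ('a::topological_space \<Rightarrow> real) \<Rightarrow> real" and l :: "('a \<Rightarrow> real) \<Rightarrow> real"
  assumes lin: "\<And>n f g c. bb f \<Longrightarrow> bb g \<Longrightarrow> L n (\<lambda>x. c * f x + g x) = c * L n f + L n g"
    and linl: "\<And>f g c. bb f \<Longrightarrow> bb g \<Longrightarrow> l (\<lambda>x. c * f x + g x) = c * l f + l g"
    and bnd: "\<And>n f B. bb f \<Longrightarrow> (\<forall>x. \<bar>f x\<bar> \<le> B) \<Longrightarrow> \<bar>L n f\<bar> \<le> C * B"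
    and bndl: "\<And>f B. bb f \<Longrightarrow> (\<forall>x. \<bar>f x\<bar> \<le> B) \<Longrightarrow> \<bar>l f\<bar> \<le> C * B"
    and ind: "\<And>A. A \<in> sets borel \<Longrightarrow> (\<lambda>n. L n (indicator A)) \<longlonglongrightarrow> l (indicator A)"
    and f: "bb f"
  shows "(\<lambda>n. L n f) \<longlonglongrightarrow> l f"
proof -
  have L0: "L n (\<lambda>x. 0) = 0" for n
    using lin[of "\<lambda>x. 0" "\<lambda>x. 0" n 1] bb_const[of 0] by simp
  have l0: "l (\<lambda>x. 0) = 0"
    using linl[of "\<lambda>x. 0" "\<lambda>x. 0" 1] bb_const[of 0] by simp
  have Lsum: "finite Z \<Longrightarrow> (\<And>z. z \<in> Z \<Longrightarrow> bb (h z)) \<Longrightarrow> L n (\<lambda>x. \<Sum>z\<in>Z. c z * h z x) = (\<Sum>z\<in>Z. c z * L n (h z))" for Z h c n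
  proof (induction Z rule: finite_induct)
    case empty then show ?case using L0 by simp
  next
    case (insert z Z)
    have "bb (\<lambda>x. \<Sum>z\<in>Z. c z * h z x)" using insert
      by (intro bb_sum bb_scale) auto
    then show ?case using insert lin[of "h z" "\<lambda>x. \<Sum>z\<in>Z. c z * h z x" n "c z"] by simp
  qed
  have lsum: "finite Z \<Longrightarrow> (\<And>z. z \<in> Z \<Longrightarrow> bb (h z)) \<Longrightarrow> l (\<lambda>x. \<Sum>z\<in>Z. c z * h z x) = (\<Sum>z\<in>Z. c z * l (h z))" for Z h c
  proof (induction Z rule: finite_induct)
    case empty then show ?case using l0 by simp
  next
    case (insert z Z)
    have "bb (\<lambda>x. \<Sum>z\<in>Z. c z * h z x)" using insert
      by (intro bb_sum bb_scale) auto
    then show ?case using insert linl[of "h z" "\<lambda>x. \<Sum>z\<in>Z. c z * h z x" "c z"] by simp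
  qed
  have Ldiff: "bb g \<Longrightarrow> bb h \<Longrightarrow> L n (\<lambda>x. g x - h x) = L n g - L n h" for g h n
    using lin[of h g n "-1"] by simp
  have ldiff: "bb g \<Longrightarrow> bb h \<Longrightarrow> l (\<lambda>x. g x - h x) = l g - l h" for g h
    using linl[of h g "-1"] by simp
  from f obtain B where B: "\<forall>x. \<bar>f x\<bar> \<le> B" and fm: "f \<in> borel_measurable borel" unfolding bb_def by blast
  show ?thesis
  proof (rule LIMSEQ_I)
    fix r :: real assume r: "r > 0"
    obtain m :: nat where m: "real m > 3 * (\<bar>C\<bar> + 1) / r" using reals_Archimedean2 by blast
    define M where "M = real (Suc m)"
    have M0: "M > 0" unfolding M_def by simp
    have Mbig: "3 * (\<bar>C\<bar> + 1) / r < M" using m unfolding M_def by simp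
    define K where "K = \<lceil>M * B\<rceil> + 1"
    define Z where "Z = {-K..K}"
    define A where "A z = {x. \<lfloor>M * f x\<rfloor> = z}" for z
    define g where "g x = (\<Sum>z\<in>Z. (real_of_int z / M) * indicator (A z) x)" for x
    have Af: "finite Z" unfolding Z_def by simp
    have As: "A z \<in> sets borel" for z unfolding A_def using fm by measurable
    have fl: "\<lfloor>M * f x\<rfloor> \<in> Z" for x
    proof -
      have "\<bar>M * f x\<bar> \<le> M * B" using B M0 by (simp add: abs_mult mult_left_mono)
      then have "- (M*B) \<le> M * f x" "M * f x \<le> M * B" by linarith+
      then show ?thesis unfolding Z_def K_def
        by (simp; linarith)
    qed
    have gx: "g x = real_of_int \<lfloor>M * f x\<rfloor> / M" for x
    proof -
      have "g x = (\<Sum>z\<in>Z. if z = \<lfloor>M * f x\<rfloor> then real_of_int z / M else 0)"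
        unfolding g_def A_def by (intro sum.cong) (auto simp: indicator_def)
      also have "\<dots> = real_of_int \<lfloor>M * f x\<rfloor> / M" using fl[of x] Af by (simp add: sum.delta')
      finally show ?thesis .
    qed
    have err: "\<bar>f x - g x\<bar> \<le> 1 / M" for x
    proof -
      have "real_of_int \<lfloor>M * f x\<rfloor> \<le> M * f x" "M * f x < real_of_int \<lfloor>M * f x\<rfloor> + 1" by linarith+
      have eq: "f x - real_of_int \<lfloor>M * f x\<rfloor> / M = (M * f x - real_of_int \<lfloor>M * f x\<rfloor>) / M"
        using M0 by (simp add: field_simps)
      have "0 \<le> (M * f x - real_of_int \<lfloor>M * f x\<rfloor>) / M" using M0 by (intro divide_nonneg_pos) linarith+
      moreover have "(M * f x - real_of_int \<lfloor>M * f x\<rfloor>) / M \<le> 1 / M" using M0 by (intro divide_right_mono) linarith+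
      ultimately have "0 \<le> f x - real_of_int \<lfloor>M * f x\<rfloor> / M" "f x - real_of_int \<lfloor>M * f x\<rfloor> / M \<le> 1 / M"
        unfolding eq by auto
      then show ?thesis unfolding gx by simp
    qed
    have gbb: "bb g" unfolding g_def using Af by (intro bb_sum bb_scale bb_indicator As)
    have dbb: "bb (\<lambda>x. f x - g x)" using bb_lin[OF gbb f, of "-1"] by simp
    have Lg: "L n g = (\<Sum>z\<in>Z. (real_of_int z / M) * L n (indicator (A z)))" for n
      unfolding g_def using Af by (intro Lsum bb_indicator As)
    have lg: "l g = (\<Sum>z\<in>Z. (real_of_int z / M) * l (indicator (A z)))"
      unfolding g_def using Af by (intro lsum bb_indicator As)
    have "(\<lambda>n. L n g) \<longlonglongrightarrow> l g" unfolding Lg lg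
      by (intro tendsto_sum tendsto_mult tendsto_const ind As)
    then obtain N where N: "\<And>n. n \<ge> N \<Longrightarrow> \<bar>L n g - l g\<bar> < r/3"
      using LIMSEQ_D[of "\<lambda>n. L n g" "l g" "r/3"] r by auto
    have eb: "\<bar>C\<bar> * (1/M) < r / 3"
    proof -
      have "3 * (\<bar>C\<bar> + 1) < M * r" using Mbig r by (simp add: field_simps)
      moreover have "3 * \<bar>C\<bar> < 3 * (\<bar>C\<bar> + 1)" by simp
      ultimately have "3 * \<bar>C\<bar> < M * r" by linarith
      then show ?thesis using M0 by (simp add: field_simps)
    qed
    show "\<exists>no. \<forall>n\<ge>no. norm (L n f - l f) < r"
    proof (intro exI allI impI)
      fix n assume n: "n \<ge> N"
      have "\<bar>L n (\<lambda>x. f x - g x)\<bar> \<le> C * (1/M)" using bnd[OF dbb] err by blast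
      moreover have "\<bar>l (\<lambda>x. f x - g x)\<bar> \<le> C * (1/M)" using bndl[OF dbb] err by blast
      moreover have "L n (\<lambda>x. f x - g x) = L n f - L n g" by (rule Ldiff[OF f gbb])
      moreover have "l (\<lambda>x. f x - g x) = l f - l g" by (rule ldiff[OF f gbb])
      moreover have "C * (1/M) \<le> \<bar>C\<bar> * (1/M)" using M0 by (intro mult_right_mono) auto
      ultimately show "norm (L n f - l f) < r" using N[OF n] eb unfolding real_norm_def by linarith
    qed
  qed
qed




lemma prob_abs_integral_bound:
  fixes h :: "'b \<Rightarrow> real"
  assumes "prob_space M" "h \<in> borel_measurable M" "\<forall>x. \<bar>h x\<bar> \<le> B"
  shows "\<bar>integral\<^sup>L M h\<bar> \<le> B"
proof -
  interpret prob_space M by fact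
  have "\<bar>integral\<^sup>L M h\<bar> \<le> integral\<^sup>L M (\<lambda>x. \<bar>h x\<bar>)"
    using integral_norm_bound[of M h] by simp
  also have "\<dots> \<le> integral\<^sup>L M (\<lambda>x. B)"
    using assms by (intro integral_mono integrable_const_bound[where B=B]) auto
  also have "\<dots> = B" by (simp add: prob_space)
  finally show ?thesis .
qed

lemma prob_integrable_bound:
  fixes h :: "'b \<Rightarrow> real"
  assumes "prob_space M" "h \<in> borel_measurable M" "\<forall>x. \<bar>h x\<bar> \<le> B"
  shows "integrable M h"
proof -
  interpret prob_space M by fact
  show ?thesis using assms by (intro integrable_const_bound[where B=B]) auto
qed

locale chaos = prob_space \<mu> for \<mu> :: "'a::{metric_space,second_countable_topology} measure" +
  fixes S :: "'a \<Rightarrow> 'a" and \<nu> :: "'a measure" and P :: "'a set set"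
  assumes sets_mu: "sets \<mu> = sets borel"
    and Smeas: "S \<in> borel_measurable borel"
    and Pstable: "Int_stable P"
    and Pborel: "P \<subseteq> sets borel"
    and Pgen: "sigma_sets UNIV P = sets borel"
    and mix: "\<forall>A\<in>P. \<forall>B\<in>P.
           (\<lambda>k. SUP i\<in>{1::nat..}.
              \<bar>measure \<mu> ((S ^^ i) -` A \<inter> (S ^^ k) -` ((S ^^ i) -` B))
               - measure \<mu> ((S ^^ i) -` A) * measure \<mu> ((S ^^ k) -` ((S ^^ i) -` B))\<bar>)
           \<longlonglongrightarrow> 0"
    and asym: "asymptotically_stationary \<mu> S \<nu>"
begin

lemma sp: "space \<mu> = UNIV"
  using sets_eq_imp_space_eq[OF sets_mu] by simp

lemma Tmeas: "(S ^^ n) \<in> measurable borel borel"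
  by (rule measurable_compose_n[OF Smeas])

lemma Tmeas_mu: "(S ^^ n) \<in> measurable \<mu> borel"
  using Tmeas unfolding measurable_cong_sets[OF sets_mu refl] .

lemma comp_meas: "f \<in> borel_measurable borel \<Longrightarrow> (\<lambda>x. f ((S ^^ n) x)) \<in> borel_measurable \<mu>"
  by (rule measurable_compose[OF Tmeas_mu])

lemma sets_nu: "sets \<nu> = sets borel"
  using asym unfolding asymptotically_stationary_def by auto

lemma sp_nu: "space \<nu> = UNIV"
  using sets_eq_imp_space_eq[OF sets_nu] by simp

lemma asym_lim: "A \<in> sets borel \<Longrightarrow> (\<lambda>k. emeasure \<mu> ((S ^^ k) -` A)) \<longlonglongrightarrow> emeasure \<nu> A"
  using asym unfolding asymptotically_stationary_def by auto

lemma prob_nu: "prob_space \<nu>"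
proof
  have "(\<lambda>k. emeasure \<mu> ((S ^^ k) -` UNIV)) \<longlonglongrightarrow> emeasure \<nu> UNIV" by (rule asym_lim) simp
  moreover have "emeasure \<mu> ((S ^^ k) -` UNIV) = 1" for k using emeasure_space_1 sp by simp
  ultimately have "(\<lambda>k. 1) \<longlonglongrightarrow> emeasure \<nu> UNIV" by simp
  then have "emeasure \<nu> UNIV = 1" using LIMSEQ_unique[OF _ tendsto_const] by metis
  then show "emeasure \<nu> (space \<nu>) = 1" using sp_nu by simp
qed

lemma measure_lim: "A \<in> sets borel \<Longrightarrow> (\<lambda>k. measure \<mu> ((S ^^ k) -` A)) \<longlonglongrightarrow> measure \<nu> A"
proof -
  assume A: "A \<in> sets borel"
  interpret N: prob_space \<nu> by (rule prob_nu)
  have "emeasure \<nu> A = ennreal (measure \<nu> A)" using N.emeasure_eq_measure by simp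
  then show ?thesis unfolding measure_def using asym_lim[OF A]
    by (intro tendsto_enn2real) auto
qed

lemma int_comp: "bb f \<Longrightarrow> integrable \<mu> (\<lambda>x. f ((S ^^ n) x))"
  unfolding bb_def by (auto intro!: prob_integrable_bound[OF prob_space_axioms] comp_meas)

lemma int_nu: "bb f \<Longrightarrow> integrable \<nu> f"
  unfolding bb_def using measurable_cong_sets[OF sets_nu refl]
  by (auto intro!: prob_integrable_bound[OF prob_nu])

definition e :: "('a \<Rightarrow> real) \<Rightarrow> nat \<Rightarrow> real" where
  "e f n = (\<integral>x. f ((S ^^ n) x) \<partial>\<mu>)"

definition c :: "('a \<Rightarrow> real) \<Rightarrow> real" where
  "c f = (\<integral>x. f x \<partial>\<nu>)"

lemma stat: "bb f \<Longrightarrow> (\<lambda>n. e f n) \<longlonglongrightarrow> c f"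
proof (rule approx_lemma[where L="\<lambda>n f. e f n" and l=c and C=1])
  show "e (\<lambda>x. a * g x + h x) n = a * e g n + e h n" if "bb g" "bb h" for n g h a
    unfolding e_def using int_comp[OF that(1)] int_comp[OF that(2)] by simp
  show "c (\<lambda>x. a * g x + h x) = a * c g + c h" if "bb g" "bb h" for g h a
    unfolding c_def using int_nu[OF that(1)] int_nu[OF that(2)] by simp
  show "\<bar>e g n\<bar> \<le> 1 * B" if "bb g" "\<forall>x. \<bar>g x\<bar> \<le> B" for n g B
    unfolding e_def using that unfolding bb_def
    by (simp, intro prob_abs_integral_bound[OF prob_space_axioms] comp_meas) auto
  show "\<bar>c g\<bar> \<le> 1 * B" if "bb g" "\<forall>x. \<bar>g x\<bar> \<le> B" for g B
    unfolding c_def using that measurable_cong_sets[OF sets_nu refl] unfolding bb_def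
    by (simp, intro prob_abs_integral_bound[OF prob_nu]) auto
  show "(\<lambda>n. e (indicator A) n) \<longlonglongrightarrow> c (indicator A)" if "A \<in> sets borel" for A
  proof -
    have "e (indicator A) n = measure \<mu> ((S ^^ n) -` A)" for n
    proof -
      have "(\<lambda>x. indicator A ((S ^^ n) x) :: real) = indicator ((S ^^ n) -` A)" by (auto simp: indicator_def)
      then show ?thesis unfolding e_def using sp by simp
    qed
    moreover have "c (indicator A) = measure \<nu> A" unfolding c_def using sp_nu by simp
    ultimately show ?thesis using measure_lim[OF that] by simp
  qed
qed

lemma stat_cesaro: "bb f \<Longrightarrow> (\<lambda>n. (\<Sum>a\<in>{1..n}. e f a) / n) \<longlonglongrightarrow> c f"
  by (rule cesaro[OF stat])

end



context chaos begin

lemma dynkin_ext: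
  fixes L m :: "'a set \<Rightarrow> nat \<Rightarrow> real" and C :: real
  assumes base: "\<And>A. A \<in> P \<Longrightarrow> L A \<longlonglongrightarrow> 0"
    and univ: "L UNIV \<longlonglongrightarrow> 0"
    and compl: "\<And>A n. A \<in> sets borel \<Longrightarrow> L (UNIV - A) n = L UNIV n - L A n"
    and add: "\<And>A B n. A \<in> sets borel \<Longrightarrow> B \<in> sets borel \<Longrightarrow> A \<inter> B = {} \<Longrightarrow> L (A \<union> B) n = L A n + L B n"
    and C: "C \<ge> 0"
    and bound: "\<And>A n. A \<in> sets borel \<Longrightarrow> \<bar>L A n\<bar> \<le> C * m A n"
    and mlim: "\<And>A. A \<in> sets borel \<Longrightarrow> m A \<longlonglongrightarrow> measure \<nu> A"
    and A: "A \<in> sets borel"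
  shows "L A \<longlonglongrightarrow> 0"
proof -
  interpret N: prob_space \<nu> by (rule prob_nu)
  have Lempty: "L {} n = 0" for n using add[of "{}" "{}" n] by simp
  have Asig: "A \<in> sigma_sets UNIV P" using A Pgen by simp
  show ?thesis
  proof (rule sigma_sets_induct_disjoint[of P UNIV A "\<lambda>A. L A \<longlonglongrightarrow> 0", OF Pstable _ Asig])
    show "P \<subseteq> Pow UNIV" by simp
    show "L A \<longlonglongrightarrow> 0" if "A \<in> P" for A using base that .
    have "L {} = (\<lambda>n. 0)" using Lempty by auto
    then show "L {} \<longlonglongrightarrow> 0" by simp
    show "L (UNIV - A) \<longlonglongrightarrow> 0" if "A \<in> sigma_sets UNIV P" "L A \<longlonglongrightarrow> 0" for A
    proof -
      have "A \<in> sets borel" using that Pgen by simp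
      then have "L (UNIV - A) = (\<lambda>n. L UNIV n - L A n)" using compl by auto
      then show ?thesis using tendsto_diff[OF univ that(2)] by simp
    qed
    show "L (\<Union>i. A i) \<longlonglongrightarrow> 0" if dj: "disjoint_family A" and rA: "range A \<subseteq> sigma_sets UNIV P"
      and IH: "\<And>i. L (A i) \<longlonglongrightarrow> 0" for A :: "nat \<Rightarrow> 'a set"
    proof -
      have Ab: "A i \<in> sets borel" for i using rA Pgen by auto
      define U where "U = (\<Union>i. A i)"
      define UM where "UM M = (\<Union>i\<in>{..<M}. A i)" for M
      define T where "T M = (\<Union>i\<in>{M..}. A i)" for M
      have Ub: "U \<in> sets borel" unfolding U_def using Ab by auto
      have UMb: "UM M \<in> sets borel" for M unfolding UM_def using Ab by auto
      have Tb: "T M \<in> sets borel" for M unfolding T_def using Ab by auto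
      have decomp: "U = UM M \<union> T M" for M unfolding U_def UM_def T_def
        by (auto simp: not_less) (metis atLeast_iff lessThan_iff not_less)
      have djx: "i \<noteq> j \<Longrightarrow> x \<in> A i \<Longrightarrow> x \<in> A j \<Longrightarrow> False" for i j x
        using dj unfolding disjoint_family_on_def by blast
      have disj: "UM M \<inter> T M = {}" for M
        unfolding UM_def T_def using djx by (auto, metis less_le_trans less_irrefl)
      have LUM: "L (UM M) n = (\<Sum>i<M. L (A i) n)" for M n
      proof (induction M)
        case 0 then show ?case using Lempty by (simp add: UM_def)
      next
        case (Suc M)
        have "UM (Suc M) = UM M \<union> A M" unfolding UM_def by (auto simp: lessThan_Suc)
        moreover have "UM M \<inter> A M = {}" unfolding UM_def using djx by (auto, metis less_irrefl)
        ultimately show ?case using add[OF UMb Ab, of M M n] Suc by simp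
      qed
      have LUMt: "L (UM M) \<longlonglongrightarrow> 0" for M
        unfolding LUM by (rule tendsto_null_sum) (rule IH)
      have LU: "L U n = L (UM M) n + L (T M) n" for M n
        using add[OF UMb Tb disj] decomp by metis
      have dec: "decseq T" unfolding T_def decseq_def by (auto, meson atLeast_iff order_trans)
      have inter: "(\<Inter>M. T M) = {}"
      proof (rule ccontr)
        assume "(\<Inter>M. T M) \<noteq> {}"
        then obtain x where x: "\<And>M. x \<in> T M" by auto
        from x[of 0] obtain i where i: "x \<in> A i" unfolding T_def by auto
        from x[of "Suc i"] obtain j where j: "j \<ge> Suc i" "x \<in> A j" unfolding T_def by auto
        then have "i \<noteq> j" by auto
        then show False using djx i j(2) by blast
      qed
      have nuT: "(\<lambda>M. measure \<nu> (T M)) \<longlonglongrightarrow> 0"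
      proof -
        have "(\<lambda>M. measure \<nu> (T M)) \<longlonglongrightarrow> measure \<nu> (\<Inter>M. T M)"
          using Tb sets_nu dec by (intro Lim_measure_decseq) (auto simp: N.emeasure_finite)
        then show ?thesis using inter by simp
      qed
      show ?thesis unfolding U_def[symmetric]
      proof (rule LIMSEQ_I)
        fix r :: real assume r: "r > 0"
        have "(\<lambda>M. C * measure \<nu> (T M)) \<longlonglongrightarrow> 0" using tendsto_mult_right_zero[OF nuT] by simp
        then obtain M where M: "\<bar>C * measure \<nu> (T M)\<bar> < r/3"
          using LIMSEQ_D[of _ 0 "r/3"] r by fastforce
        have rr: "r / (3 * (C + 1)) > 0" using r C by simp
        obtain N1 where N1: "\<And>n. n \<ge> N1 \<Longrightarrow> \<bar>m (T M) n - measure \<nu> (T M)\<bar> < r / (3 * (C + 1))"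
          using LIMSEQ_D[OF mlim[OF Tb] rr] by auto
        obtain N2 where N2: "\<And>n. n \<ge> N2 \<Longrightarrow> \<bar>L (UM M) n\<bar> < r / 3"
          using LIMSEQ_D[OF LUMt, of "r/3" M] r by auto
        show "\<exists>no. \<forall>n\<ge>no. norm (L U n - 0) < r"
        proof (intro exI allI impI)
          fix n assume n: "n \<ge> max N1 N2"
          have b1: "\<bar>L (T M) n\<bar> \<le> C * m (T M) n" by (rule bound[OF Tb])
          have "C * m (T M) n \<le> C * (measure \<nu> (T M) + r / (3 * (C + 1)))"
            using N1[of n] n C by (intro mult_left_mono) auto
          also have "\<dots> = C * measure \<nu> (T M) + C * (r / (3 * (C + 1)))" by (simp add: algebra_simps)
          also have "C * (r / (3 * (C + 1))) \<le> r / 3"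
          proof -
            have "C * (r / (3 * (C + 1))) = (C / (C + 1)) * (r / 3)" by (simp add: field_simps)
            also have "\<dots> \<le> 1 * (r / 3)" using C r by (intro mult_right_mono) auto
            finally show ?thesis by simp
          qed
          finally have "C * m (T M) n \<le> C * measure \<nu> (T M) + r / 3" by simp
          then have "\<bar>L (T M) n\<bar> < 2 * r / 3" using b1 M by linarith
          moreover have "\<bar>L (UM M) n\<bar> < r / 3" using N2 n by auto
          ultimately show "norm (L U n - 0) < r" using LU[of n M] by simp
        qed
      qed
    qed
  qed
qed

end



lemma bb_mult: "bb f \<Longrightarrow> bb g \<Longrightarrow> bb (\<lambda>x. f x * g x)"
proof -
  assume f: "bb f" and g: "bb g"
  then obtain B1 B2 where b: "\<forall>x. \<bar>f x\<bar> \<le> B1" "\<forall>x. \<bar>g x\<bar> \<le> B2" unfolding bb_def by blast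
  have "\<bar>f x * g x\<bar> \<le> B1 * B2" for x
    unfolding abs_mult using b by (intro mult_mono) (auto intro: order_trans[OF abs_ge_zero])
  then show ?thesis using f g unfolding bb_def by auto
qed

lemma bb_bound: "bb f \<Longrightarrow> \<exists>B\<ge>0. \<forall>x. \<bar>f x\<bar> \<le> B"
  unfolding bb_def by (metis abs_ge_zero order_trans)

context chaos begin

lemma int_comp2: "bb f \<Longrightarrow> bb g \<Longrightarrow> integrable \<mu> (\<lambda>x. f ((S ^^ a) x) * g ((S ^^ b) x))"
proof -
  assume f: "bb f" and g: "bb g"
  then obtain B1 B2 where b: "\<forall>x. \<bar>f x\<bar> \<le> B1" "\<forall>x. \<bar>g x\<bar> \<le> B2" unfolding bb_def by blast
  have "\<bar>f ((S ^^ a) x) * g ((S ^^ b) x)\<bar> \<le> B1 * B2" for x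
    unfolding abs_mult using b by (intro mult_mono) (auto intro: order_trans[OF abs_ge_zero])
  moreover have "(\<lambda>x. f ((S ^^ a) x) * g ((S ^^ b) x)) \<in> borel_measurable \<mu>"
    using f g unfolding bb_def by (intro borel_measurable_times comp_meas) auto
  ultimately show ?thesis by (intro prob_integrable_bound[OF prob_space_axioms]) auto
qed

lemma e_lin: "bb f \<Longrightarrow> bb g \<Longrightarrow> e (\<lambda>x. t * f x + g x) a = t * e f a + e g a"
  unfolding e_def using int_comp[of f a] int_comp[of g a] by simp

lemma e_bound: "bb f \<Longrightarrow> \<forall>x. \<bar>f x\<bar> \<le> B \<Longrightarrow> \<bar>e f a\<bar> \<le> B"
  unfolding e_def bb_def by (intro prob_abs_integral_bound[OF prob_space_axioms] comp_meas) auto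

lemma e_one: "e (\<lambda>x. 1) a = 1"
  unfolding e_def by (simp add: prob_space)

definition Cov :: "('a \<Rightarrow> real) \<Rightarrow> ('a \<Rightarrow> real) \<Rightarrow> nat \<Rightarrow> nat \<Rightarrow> real" where
  "Cov f g a b = (\<integral>x. f ((S ^^ a) x) * g ((S ^^ b) x) \<partial>\<mu>) - e f a * e g b"

definition W :: "('a \<Rightarrow> real) \<Rightarrow> ('a \<Rightarrow> real) \<Rightarrow> nat \<Rightarrow> real" where
  "W f g n = (\<Sum>a\<in>{1..n}. \<Sum>b\<in>{1..n}. if a < b then Cov f g a b else 0) / (real n)^2"

lemma Cov_lin1: "bb f1 \<Longrightarrow> bb f2 \<Longrightarrow> bb g \<Longrightarrow>
   Cov (\<lambda>x. t * f1 x + f2 x) g a b = t * Cov f1 g a b + Cov f2 g a b"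
proof -
  assume f1: "bb f1" and f2: "bb f2" and g: "bb g"
  have "(\<integral>x. (t * f1 ((S ^^ a) x) + f2 ((S ^^ a) x)) * g ((S ^^ b) x) \<partial>\<mu>)
      = (\<integral>x. t * (f1 ((S ^^ a) x) * g ((S ^^ b) x)) + f2 ((S ^^ a) x) * g ((S ^^ b) x) \<partial>\<mu>)"
    by (simp add: algebra_simps)
  also have "\<dots> = t * (\<integral>x. f1 ((S ^^ a) x) * g ((S ^^ b) x) \<partial>\<mu>) + (\<integral>x. f2 ((S ^^ a) x) * g ((S ^^ b) x) \<partial>\<mu>)"
    using int_comp2[OF f1 g, of a b] int_comp2[OF f2 g, of a b] by simp
  finally show ?thesis unfolding Cov_def e_lin[OF f1 f2] by (simp add: algebra_simps)
qed

lemma Cov_lin2: "bb f \<Longrightarrow> bb g1 \<Longrightarrow> bb g2 \<Longrightarrow>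
   Cov f (\<lambda>x. t * g1 x + g2 x) a b = t * Cov f g1 a b + Cov f g2 a b"
proof -
  assume f: "bb f" and g1: "bb g1" and g2: "bb g2"
  have "(\<integral>x. f ((S ^^ a) x) * (t * g1 ((S ^^ b) x) + g2 ((S ^^ b) x)) \<partial>\<mu>)
      = (\<integral>x. t * (f ((S ^^ a) x) * g1 ((S ^^ b) x)) + f ((S ^^ a) x) * g2 ((S ^^ b) x) \<partial>\<mu>)"
    by (simp add: algebra_simps)
  also have "\<dots> = t * (\<integral>x. f ((S ^^ a) x) * g1 ((S ^^ b) x) \<partial>\<mu>) + (\<integral>x. f ((S ^^ a) x) * g2 ((S ^^ b) x) \<partial>\<mu>)"
    using int_comp2[OF f g1, of a b] int_comp2[OF f g2, of a b] by simp
  finally show ?thesis unfolding Cov_def e_lin[OF g1 g2] by (simp add: algebra_simps)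
qed

lemma W_lin1: "bb f1 \<Longrightarrow> bb f2 \<Longrightarrow> bb g \<Longrightarrow>
   W (\<lambda>x. t * f1 x + f2 x) g n = t * W f1 g n + W f2 g n"
proof -
  assume f1: "bb f1" and f2: "bb f2" and g: "bb g"
  have *: "(if a < b then Cov (\<lambda>x. t * f1 x + f2 x) g a b else 0)
     = t * (if a < b then Cov f1 g a b else 0) + (if a < b then Cov f2 g a b else 0)" for a b
    using Cov_lin1[OF f1 f2 g] by simp
  show ?thesis unfolding W_def * sum.distrib sum_distrib_left[symmetric]
    by (simp add: add_divide_distrib)
qed

lemma W_lin2: "bb f \<Longrightarrow> bb g1 \<Longrightarrow> bb g2 \<Longrightarrow>
   W f (\<lambda>x. t * g1 x + g2 x) n = t * W f g1 n + W f g2 n"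
proof -
  assume f: "bb f" and g1: "bb g1" and g2: "bb g2"
  have *: "(if a < b then Cov f (\<lambda>x. t * g1 x + g2 x) a b else 0)
     = t * (if a < b then Cov f g1 a b else 0) + (if a < b then Cov f g2 a b else 0)" for a b
    using Cov_lin2[OF f g1 g2] by simp
  show ?thesis unfolding W_def * sum.distrib sum_distrib_left[symmetric]
    by (simp add: add_divide_distrib)
qed

lemma Cov_bound: "bb f \<Longrightarrow> bb g \<Longrightarrow> \<forall>x. \<bar>f x\<bar> \<le> B1 \<Longrightarrow> \<forall>x. \<bar>g x\<bar> \<le> B2 \<Longrightarrow> \<bar>Cov f g a b\<bar> \<le> 2 * B1 * B2"
proof -
  assume f: "bb f" and g: "bb g" and b1: "\<forall>x. \<bar>f x\<bar> \<le> B1" and b2: "\<forall>x. \<bar>g x\<bar> \<le> B2"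
  have B1: "B1 \<ge> 0" using b1 abs_ge_zero order_trans by blast
  have B2: "B2 \<ge> 0" using b2 abs_ge_zero order_trans by blast
  have p: "\<bar>f ((S ^^ a) x) * g ((S ^^ b) x)\<bar> \<le> B1 * B2" for x
    unfolding abs_mult using b1 b2 by (intro mult_mono) auto
  have "\<bar>\<integral>x. f ((S ^^ a) x) * g ((S ^^ b) x) \<partial>\<mu>\<bar> \<le> B1 * B2"
    using f g p unfolding bb_def
    by (intro prob_abs_integral_bound[OF prob_space_axioms] borel_measurable_times comp_meas) auto
  moreover have "\<bar>e f a * e g b\<bar> \<le> B1 * B2"
    unfolding abs_mult using e_bound[OF f b1] e_bound[OF g b2] B1 by (intro mult_mono) auto
  ultimately show ?thesis unfolding Cov_def by linarith
qed

lemma W_bound_gen: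
  assumes "\<And>a b. a \<in> {1..n} \<Longrightarrow> b \<in> {1..n} \<Longrightarrow> \<bar>Cov f g a b\<bar> \<le> h a b"
  shows "\<bar>W f g n\<bar> \<le> (\<Sum>a\<in>{1..n}. \<Sum>b\<in>{1..n}. h a b) / (real n)^2"
proof -
  have "\<bar>\<Sum>a\<in>{1..n}. \<Sum>b\<in>{1..n}. if a < b then Cov f g a b else 0\<bar>
     \<le> (\<Sum>a\<in>{1..n}. \<Sum>b\<in>{1..n}. \<bar>if a < b then Cov f g a b else 0\<bar>)"
    by (rule order_trans[OF sum_abs]) (intro sum_mono sum_abs)
  also have "\<dots> \<le> (\<Sum>a\<in>{1..n}. \<Sum>b\<in>{1..n}. h a b)"
    using assms by (intro sum_mono) (auto intro: order_trans[OF abs_ge_zero])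
  finally show ?thesis unfolding W_def abs_divide by (simp add: divide_right_mono)
qed

lemma W_bound: "bb f \<Longrightarrow> bb g \<Longrightarrow> \<forall>x. \<bar>f x\<bar> \<le> B1 \<Longrightarrow> \<forall>x. \<bar>g x\<bar> \<le> B2 \<Longrightarrow> \<bar>W f g n\<bar> \<le> 2 * B1 * B2"
proof -
  assume f: "bb f" and g: "bb g" and b1: "\<forall>x. \<bar>f x\<bar> \<le> B1" and b2: "\<forall>x. \<bar>g x\<bar> \<le> B2"
  have B: "2 * B1 * B2 \<ge> 0" using b1 b2 abs_ge_zero order_trans by (metis mult_nonneg_nonneg zero_le_numeral)
  have "\<bar>W f g n\<bar> \<le> (\<Sum>a\<in>{1..n}. \<Sum>b\<in>{1..n}. 2 * B1 * B2) / (real n)^2"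
    by (rule W_bound_gen) (rule Cov_bound[OF f g b1 b2])
  also have "\<dots> \<le> 2 * B1 * B2"
  proof (cases "n = 0")
    case True then show ?thesis using B by simp
  next
    case False then show ?thesis by (simp add: power2_eq_square)
  qed
  finally show ?thesis .
qed

definition mavg :: "'a set \<Rightarrow> nat \<Rightarrow> real" where
  "mavg A n = (\<Sum>a\<in>{1..n}. measure \<mu> ((S ^^ a) -` A)) / n"

lemma mavg_lim: "A \<in> sets borel \<Longrightarrow> mavg A \<longlonglongrightarrow> measure \<nu> A"
  unfolding mavg_def by (rule cesaro[OF measure_lim])

lemma e_ind: "A \<in> sets borel \<Longrightarrow> e (indicator A) a = measure \<mu> ((S ^^ a) -` A)"
proof -
  have "(\<lambda>x. indicator A ((S ^^ a) x) :: real) = indicator ((S ^^ a) -` A)" by (auto simp: indicator_def)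
  then show ?thesis unfolding e_def using sp by simp
qed

lemma int_ind_bound:
  assumes A: "A \<in> sets borel" and g: "bb g" and b: "\<forall>x. \<bar>g x\<bar> \<le> B"
  shows "\<bar>\<integral>x. indicator A ((S ^^ a) x) * g ((S ^^ b) x) \<partial>\<mu>\<bar> \<le> B * measure \<mu> ((S ^^ a) -` A)"
proof -
  have "\<bar>\<integral>x. indicator A ((S ^^ a) x) * g ((S ^^ b) x) \<partial>\<mu>\<bar> \<le> (\<integral>x. \<bar>indicator A ((S ^^ a) x) * g ((S ^^ b) x)\<bar> \<partial>\<mu>)"
    using integral_norm_bound[of \<mu> "\<lambda>x. indicator A ((S ^^ a) x) * g ((S ^^ b) x)"] by simp
  also have "\<dots> \<le> (\<integral>x. B * indicator A ((S ^^ a) x) \<partial>\<mu>)"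
  proof (rule integral_mono)
    show "integrable \<mu> (\<lambda>x. \<bar>indicator A ((S ^^ a) x) * g ((S ^^ b) x)\<bar>)"
      using int_comp2[OF bb_indicator[OF A] g] by simp
    show "integrable \<mu> (\<lambda>x. B * indicator A ((S ^^ a) x))"
      using int_comp[OF bb_indicator[OF A], of a] by simp
    show "\<bar>indicator A ((S ^^ a) x) * g ((S ^^ b) x)\<bar> \<le> B * indicator A ((S ^^ a) x)" for x
      using b by (auto simp: indicator_def)
  qed
  also have "\<dots> = B * e (indicator A) a" unfolding e_def by simp
  finally show ?thesis using e_ind[OF A] by simp
qed

lemma int_ind_bound2:
  assumes A: "A \<in> sets borel" and g: "bb g" and b: "\<forall>x. \<bar>g x\<bar> \<le> B"
  shows "\<bar>\<integral>x. g ((S ^^ b) x) * indicator A ((S ^^ a) x) \<partial>\<mu>\<bar> \<le> B * measure \<mu> ((S ^^ a) -` A)"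
  using int_ind_bound[OF assms, of a b] by (simp add: mult.commute)

lemma W_ind1_bound:
  assumes A: "A \<in> sets borel" and g: "bb g" and b: "\<forall>x. \<bar>g x\<bar> \<le> B"
  shows "\<bar>W (indicator A) g n\<bar> \<le> 2 * B * mavg A n"
proof -
  have B: "B \<ge> 0" using b abs_ge_zero order_trans by blast
  have "\<bar>W (indicator A) g n\<bar> \<le> (\<Sum>a\<in>{1..n}. \<Sum>b\<in>{1..n}. 2 * B * measure \<mu> ((S ^^ a) -` A)) / (real n)^2"
  proof (rule W_bound_gen)
    fix a b'
    have "\<bar>e (indicator A) a * e g b'\<bar> \<le> measure \<mu> ((S ^^ a) -` A) * B"
      unfolding abs_mult e_ind[OF A] using e_bound[OF g b] by (intro mult_mono) auto
    then show "\<bar>Cov (indicator A) g a b'\<bar> \<le> 2 * B * measure \<mu> ((S ^^ a) -` A)"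
      unfolding Cov_def using int_ind_bound[OF A g b, of a b'] by (simp add: algebra_simps)
  qed
  also have "\<dots> = 2 * B * mavg A n"
    unfolding mavg_def by (cases "n = 0") (simp_all add: sum_distrib_left[symmetric] power2_eq_square field_simps)
  finally show ?thesis .
qed

lemma W_ind2_bound:
  assumes A: "A \<in> sets borel" and g: "bb g" and b: "\<forall>x. \<bar>g x\<bar> \<le> B"
  shows "\<bar>W g (indicator A) n\<bar> \<le> 2 * B * mavg A n"
proof -
  have B: "B \<ge> 0" using b abs_ge_zero order_trans by blast
  have "\<bar>W g (indicator A) n\<bar> \<le> (\<Sum>a\<in>{1..n}. \<Sum>b\<in>{1..n}. 2 * B * measure \<mu> ((S ^^ b) -` A)) / (real n)^2"
  proof (rule W_bound_gen)
    fix a b'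
    have "\<bar>e g a * e (indicator A) b'\<bar> \<le> B * measure \<mu> ((S ^^ b') -` A)"
      unfolding abs_mult e_ind[OF A] using e_bound[OF g b] B by (intro mult_mono) auto
    then show "\<bar>Cov g (indicator A) a b'\<bar> \<le> 2 * B * measure \<mu> ((S ^^ b') -` A)"
      unfolding Cov_def using int_ind_bound2[OF A g b, where a=b' and b=a] by (simp add: algebra_simps)
  qed
  also have "\<dots> = 2 * B * mavg A n"
    unfolding mavg_def by (cases "n = 0") (simp_all add: sum_distrib_left[symmetric] power2_eq_square field_simps)
  finally show ?thesis .
qed

end



context chaos begin

lemma W_bound_gen2:
  assumes "\<And>a b. a \<in> {1..n} \<Longrightarrow> b \<in> {1..n} \<Longrightarrow> a < b \<Longrightarrow> \<bar>Cov f g a b\<bar> \<le> h a b"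
  shows "\<bar>W f g n\<bar> \<le> (\<Sum>a\<in>{1..n}. \<Sum>b\<in>{1..n}. if a < b then h a b else 0) / (real n)^2"
proof -
  have "\<bar>\<Sum>a\<in>{1..n}. \<Sum>b\<in>{1..n}. if a < b then Cov f g a b else 0\<bar>
     \<le> (\<Sum>a\<in>{1..n}. \<Sum>b\<in>{1..n}. \<bar>if a < b then Cov f g a b else 0\<bar>)"
    by (rule order_trans[OF sum_abs]) (intro sum_mono sum_abs)
  also have "\<dots> \<le> (\<Sum>a\<in>{1..n}. \<Sum>b\<in>{1..n}. if a < b then h a b else 0)"
    using assms by (intro sum_mono) auto
  finally show ?thesis unfolding W_def abs_divide by (simp add: divide_right_mono)
qed

lemma W_P:
  assumes A: "A \<in> P" and B: "B \<in> P"
  shows "W (indicator A) (indicator B) \<longlonglongrightarrow> 0"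
proof -
  have Ab: "A \<in> sets borel" and Bb: "B \<in> sets borel" using A B Pborel by auto
  define h where "h i k = \<bar>measure \<mu> ((S ^^ i) -` A \<inter> (S ^^ k) -` ((S ^^ i) -` B))
               - measure \<mu> ((S ^^ i) -` A) * measure \<mu> ((S ^^ k) -` ((S ^^ i) -` B))\<bar>" for i k :: nat
  define \<delta> where "\<delta> k = (SUP i\<in>{1::nat..}. h i k)" for k
  have dlim: "\<delta> \<longlonglongrightarrow> 0" using mix A B unfolding \<delta>_def h_def by blast
  have h1: "h i k \<le> 1" for i k
  proof -
    have "measure \<mu> ((S ^^ i) -` A \<inter> (S ^^ k) -` ((S ^^ i) -` B)) \<le> 1" by simp
    moreover have "0 \<le> measure \<mu> ((S ^^ i) -` A) * measure \<mu> ((S ^^ k) -` ((S ^^ i) -` B))" by simp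
    moreover have "measure \<mu> ((S ^^ i) -` A) * measure \<mu> ((S ^^ k) -` ((S ^^ i) -` B)) \<le> 1 * 1"
      by (intro mult_mono) auto
    moreover have "0 \<le> measure \<mu> ((S ^^ i) -` A \<inter> (S ^^ k) -` ((S ^^ i) -` B))" by simp
    ultimately show ?thesis unfolding h_def by linarith
  qed
  have bdd: "bdd_above ((\<lambda>i. h i k) ` {1..})" for k using h1 by (intro bdd_aboveI[of _ 1]) auto
  have hd: "i \<ge> 1 \<Longrightarrow> h i k \<le> \<delta> k" for i k
    unfolding \<delta>_def by (rule cSUP_upper[OF _ bdd]) auto
  have d0: "\<delta> k \<ge> 0" for k using hd[of 1 k] unfolding h_def by simp
  have Cov_eq: "\<bar>Cov (indicator A) (indicator B) a b\<bar> = h a (b - a)" if "1 \<le> a" "a < b" for a b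
  proof -
    have fp: "S ^^ b = S ^^ a \<circ> S ^^ (b - a)" using that funpow_add[of a "b - a" S] by simp
    have "(\<lambda>x. indicator A ((S ^^ a) x) * indicator B ((S ^^ b) x) :: real)
        = indicator ((S ^^ a) -` A \<inter> (S ^^ (b - a)) -` ((S ^^ a) -` B))"
      by (rule ext) (simp add: indicator_def fp)
    then have "(\<integral>x. indicator A ((S ^^ a) x) * indicator B ((S ^^ b) x) \<partial>\<mu>)
        = measure \<mu> ((S ^^ a) -` A \<inter> (S ^^ (b - a)) -` ((S ^^ a) -` B))"
      using sp by simp
    moreover have "(S ^^ b) -` B = (S ^^ (b - a)) -` ((S ^^ a) -` B)" using fp by auto
    ultimately show ?thesis unfolding Cov_def e_ind[OF Ab] e_ind[OF Bb] h_def by simp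
  qed
  have Wb: "\<bar>W (indicator A) (indicator B) n\<bar> \<le> (\<Sum>k\<in>{1..n}. \<delta> k) / n" for n
  proof -
    have "\<bar>W (indicator A) (indicator B) n\<bar> \<le> (\<Sum>a\<in>{1..n}. \<Sum>b\<in>{1..n}. if a < b then \<delta> (b - a) else 0) / (real n)^2"
      by (rule W_bound_gen2) (use Cov_eq hd in auto)
    also have "\<dots> \<le> (\<Sum>a\<in>{1..n}. \<Sum>k\<in>{1..n}. \<delta> k) / (real n)^2"
    proof (rule divide_right_mono, rule sum_mono)
      fix a assume a: "a \<in> {1..n}"
      have "(\<Sum>b\<in>{1..n}. if a < b then \<delta> (b - a) else 0) = (\<Sum>b\<in>{b\<in>{1..n}. a < b}. \<delta> (b - a))"
        by (rule sum.inter_filter[symmetric]) simp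
      also have "\<dots> = (\<Sum>k\<in>(\<lambda>b. b - a) ` {b\<in>{1..n}. a < b}. \<delta> k)"
        by (rule sum.reindex[symmetric, unfolded comp_def]) (auto simp: inj_on_def)
      also have "\<dots> \<le> (\<Sum>k\<in>{1..n}. \<delta> k)"
        by (rule sum_mono2) (auto simp: d0)
      finally show "(\<Sum>b\<in>{1..n}. if a < b then \<delta> (b - a) else 0) \<le> (\<Sum>k\<in>{1..n}. \<delta> k)" .
    qed simp
    also have "\<dots> = (\<Sum>k\<in>{1..n}. \<delta> k) / n"
      by (cases "n = 0") (simp_all add: power2_eq_square)
    finally show ?thesis .
  qed
  have "(\<lambda>n. (\<Sum>k\<in>{1..n}. \<delta> k) / n) \<longlonglongrightarrow> 0" by (rule cesaro[OF dlim])
  then show ?thesis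
    by (rule Lim_null_comparison[rotated]) (use Wb in auto)
qed

lemma W_univ: "W (indicator UNIV) g n = 0"
proof -
  have *: "Cov (indicator UNIV) g a b = 0" for a b
    unfolding Cov_def indicator_UNIV by (simp add: e_def prob_space)
  show ?thesis unfolding W_def by (simp only: *) simp
qed

lemma ind_compl: "indicator (UNIV - A) = (\<lambda>x. -1 * indicator A x + indicator UNIV x :: real)"
  by (auto simp: indicator_def)

lemma ind_union: "A \<inter> B = {} \<Longrightarrow> indicator (A \<union> B) = (\<lambda>x. 1 * indicator A x + indicator B x :: real)"
  by (rule ext) (auto simp: indicator_def)

lemma W_borel1:
  assumes A: "A \<in> sets borel" and B: "B \<in> P"
  shows "W (indicator A) (indicator B) \<longlonglongrightarrow> 0"
proof -
  have Bb: "B \<in> sets borel" using B Pborel by auto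
  have ib: "\<forall>x. \<bar>indicator B x :: real\<bar> \<le> 1" by (auto simp: indicator_def)
  show ?thesis
  proof (rule dynkin_ext[where L="\<lambda>A n. W (indicator A) (indicator B) n" and m=mavg and C=2, OF _ _ _ _ _ _ _ A])
    show "(\<lambda>n. W (indicator A) (indicator B) n) \<longlonglongrightarrow> 0" if "A \<in> P" for A using W_P[OF that B] by simp
    show "(\<lambda>n. W (indicator UNIV) (indicator B) n) \<longlonglongrightarrow> 0" unfolding W_univ by simp
    show "W (indicator (UNIV - A)) (indicator B) n = W (indicator UNIV) (indicator B) n - W (indicator A) (indicator B) n"
      if "A \<in> sets borel" for A n
      unfolding ind_compl using W_lin1[OF bb_indicator[OF that] bb_indicator[of UNIV] bb_indicator[OF Bb], of "-1" n]
      by simp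
    show "W (indicator (A1 \<union> A2)) (indicator B) n = W (indicator A1) (indicator B) n + W (indicator A2) (indicator B) n"
      if "A1 \<in> sets borel" "A2 \<in> sets borel" "A1 \<inter> A2 = {}" for A1 A2 n
      unfolding ind_union[OF that(3)] using W_lin1[OF bb_indicator[OF that(1)] bb_indicator[OF that(2)] bb_indicator[OF Bb], of 1 n]
      by simp
    show "(0::real) \<le> 2" by simp
    show "\<bar>W (indicator A) (indicator B) n\<bar> \<le> 2 * mavg A n" if "A \<in> sets borel" for A n
      using W_ind1_bound[OF that bb_indicator[OF Bb] ib, of n] by simp
    show "mavg A \<longlonglongrightarrow> measure \<nu> A" if "A \<in> sets borel" for A using mavg_lim[OF that] .
  qed
qed

lemma W_borel2:
  assumes A: "A \<in> sets borel" and B: "B \<in> sets borel"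
  shows "W (indicator A) (indicator B) \<longlonglongrightarrow> 0"
proof -
  have ib: "\<forall>x. \<bar>indicator A x :: real\<bar> \<le> 1" by (auto simp: indicator_def)
  show ?thesis
  proof (rule dynkin_ext[where L="\<lambda>B n. W (indicator A) (indicator B) n" and m=mavg and C=2, OF _ _ _ _ _ _ _ B])
    show "(\<lambda>n. W (indicator A) (indicator B) n) \<longlonglongrightarrow> 0" if "B \<in> P" for B using W_borel1[OF A that] by simp
    show "(\<lambda>n. W (indicator A) (indicator UNIV) n) \<longlonglongrightarrow> 0"
    proof -
      have *: "Cov (indicator A) (indicator UNIV) a b = 0" for a b
        unfolding Cov_def indicator_UNIV by (simp add: e_def prob_space)
      show ?thesis unfolding W_def by (simp only: *) simp
    qed
    show "W (indicator A) (indicator (UNIV - B)) n = W (indicator A) (indicator UNIV) n - W (indicator A) (indicator B) n"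
      if "B \<in> sets borel" for B n
      unfolding ind_compl using W_lin2[OF bb_indicator[OF A] bb_indicator[OF that] bb_indicator[of UNIV], of "-1" n]
      by simp
    show "W (indicator A) (indicator (A1 \<union> A2)) n = W (indicator A) (indicator A1) n + W (indicator A) (indicator A2) n"
      if "A1 \<in> sets borel" "A2 \<in> sets borel" "A1 \<inter> A2 = {}" for A1 A2 n
      unfolding ind_union[OF that(3)] using W_lin2[OF bb_indicator[OF A] bb_indicator[OF that(1)] bb_indicator[OF that(2)], of 1 n]
      by simp
    show "(0::real) \<le> 2" by simp
    show "\<bar>W (indicator A) (indicator B) n\<bar> \<le> 2 * mavg B n" if "B \<in> sets borel" for B n
      using W_ind2_bound[OF that bb_indicator[OF A] ib, of n] by simp
    show "mavg A \<longlonglongrightarrow> measure \<nu> A" if "A \<in> sets borel" for A using mavg_lim[OF that] .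
  qed
qed

lemma W_fun1:
  assumes B: "B \<in> sets borel" and f: "bb f"
  shows "(\<lambda>n. W f (indicator B) n) \<longlonglongrightarrow> 0"
proof -
  have ib: "\<forall>x. \<bar>indicator B x :: real\<bar> \<le> 1" by (auto simp: indicator_def)
  show ?thesis
  proof (rule approx_lemma[where L="\<lambda>n f. W f (indicator B) n" and l="\<lambda>f. 0" and C=2, OF _ _ _ _ _ f])
    show "W (\<lambda>x. t * g x + h x) (indicator B) n = t * W g (indicator B) n + W h (indicator B) n"
      if "bb g" "bb h" for n g h t using W_lin1[OF that bb_indicator[OF B]] .
    show "(0::real) = t * 0 + 0" for t :: real by simp
    show "\<bar>W g (indicator B) n\<bar> \<le> 2 * Bd" if "bb g" "\<forall>x. \<bar>g x\<bar> \<le> Bd" for n g Bd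
      using W_bound[OF that(1) bb_indicator[OF B] that(2) ib] by simp
    show "\<bar>0::real\<bar> \<le> 2 * Bd" if "bb g" "\<forall>x. \<bar>g x\<bar> \<le> Bd" for g Bd
    proof -
      have "\<bar>g undefined\<bar> \<le> Bd" using that(2) by blast
      then show ?thesis by linarith
    qed
    show "(\<lambda>n. W (indicator A) (indicator B) n) \<longlonglongrightarrow> 0" if "A \<in> sets borel" for A
      using W_borel2[OF that B] by simp
  qed
qed

lemma W_fun:
  assumes f: "bb f" and g: "bb g"
  shows "(\<lambda>n. W f g n) \<longlonglongrightarrow> 0"
proof -
  obtain B1 where B1: "B1 \<ge> 0" "\<forall>x. \<bar>f x\<bar> \<le> B1" using bb_bound[OF f] by blast
  show ?thesis
  proof (rule approx_lemma[where L="\<lambda>n g. W f g n" and l="\<lambda>f. 0" and C="2 * B1", OF _ _ _ _ _ g])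
    show "W f (\<lambda>x. t * g x + h x) n = t * W f g n + W f h n"
      if "bb g" "bb h" for n g h t using W_lin2[OF f that] .
    show "(0::real) = t * 0 + 0" for t :: real by simp
    show "\<bar>W f g n\<bar> \<le> 2 * B1 * Bd" if "bb g" "\<forall>x. \<bar>g x\<bar> \<le> Bd" for n g Bd
      using W_bound[OF f that(1) B1(2) that(2)] by simp
    show "\<bar>0::real\<bar> \<le> 2 * B1 * Bd" if "bb g" "\<forall>x. \<bar>g x\<bar> \<le> Bd" for g Bd
    proof -
      have "\<bar>g undefined\<bar> \<le> Bd" using that(2) by blast
      then have "0 \<le> Bd" by linarith
      then show ?thesis using B1(1) by simp
    qed
    show "(\<lambda>n. W f (indicator A) n) \<longlonglongrightarrow> 0" if "A \<in> sets borel" for A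
      using W_fun1[OF that f] by simp
  qed
qed

end



lemma prob_L1_L2:
  fixes g :: "'b \<Rightarrow> real"
  assumes M: "prob_space M" and gm: "g \<in> borel_measurable M" and b: "\<forall>x. \<bar>g x\<bar> \<le> B"
  shows "(\<integral>x. \<bar>g x\<bar> \<partial>M)^2 \<le> (\<integral>x. (g x)^2 \<partial>M)"
proof -
  interpret prob_space M by fact
  define m where "m = (\<integral>x. \<bar>g x\<bar> \<partial>M)"
  have ia: "integrable M (\<lambda>x. \<bar>g x\<bar>)" using gm b by (intro integrable_const_bound[where B=B]) auto
  have b2: "\<bar>(g x)^2\<bar> \<le> B * B" for x
  proof -
    have "\<bar>g x\<bar> * \<bar>g x\<bar> \<le> B * B" using b by (intro mult_mono) (auto intro: order_trans[OF abs_ge_zero])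
    then show ?thesis by (simp add: power2_eq_square abs_mult)
  qed
  have i2: "integrable M (\<lambda>x. (g x)^2)" using gm b2 by (intro integrable_const_bound[where B="B*B"]) auto
  have "0 \<le> (\<integral>x. (\<bar>g x\<bar> - m)^2 \<partial>M)" by simp
  also have "(\<integral>x. (\<bar>g x\<bar> - m)^2 \<partial>M) = (\<integral>x. (g x)^2 - 2 * m * \<bar>g x\<bar> + m^2 \<partial>M)"
    by (rule Bochner_Integration.integral_cong) (auto simp: power2_eq_square algebra_simps)
  also have "\<dots> = (\<integral>x. (g x)^2 \<partial>M) - 2 * m * m + m^2"
    using ia i2 unfolding m_def by (simp add: prob_space)
  finally show ?thesis unfolding m_def[symmetric] by (simp add: power2_eq_square)
qed

context chaos begin

definition avg :: "('a \<Rightarrow> real) \<Rightarrow> nat \<Rightarrow> 'a \<Rightarrow> real" where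
  "avg f n x = (\<Sum>a\<in>{1..n}. f ((S ^^ a) x)) / n"

definition mE :: "('a \<Rightarrow> real) \<Rightarrow> nat \<Rightarrow> real" where
  "mE f n = (\<Sum>a\<in>{1..n}. e f a) / n"

lemma avg_meas: "bb f \<Longrightarrow> avg f n \<in> borel_measurable \<mu>"
  unfolding avg_def[abs_def] bb_def by (intro borel_measurable_divide borel_measurable_sum comp_meas) auto

lemma avg_bound: "\<forall>x. \<bar>f x\<bar> \<le> B \<Longrightarrow> \<bar>avg f n x\<bar> \<le> B"
proof -
  assume b: "\<forall>x. \<bar>f x\<bar> \<le> B"
  have B: "B \<ge> 0" using b abs_ge_zero order_trans by blast
  have "\<bar>\<Sum>a\<in>{1..n}. f ((S ^^ a) x)\<bar> \<le> (\<Sum>a\<in>{1..n}. B)"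
    by (rule order_trans[OF sum_abs]) (intro sum_mono, use b in auto)
  then have "\<bar>\<Sum>a\<in>{1..n}. f ((S ^^ a) x)\<bar> \<le> real n * B" by simp
  then show ?thesis unfolding avg_def using B
    by (cases "n = 0") (simp_all add: abs_divide field_simps)
qed

lemma avg_int: "bb f \<Longrightarrow> (\<integral>x. avg f n x \<partial>\<mu>) = mE f n"
proof -
  assume f: "bb f"
  have "(\<integral>x. (\<Sum>a\<in>{1..n}. f ((S ^^ a) x)) \<partial>\<mu>) = (\<Sum>a\<in>{1..n}. e f a)"
    unfolding e_def using int_comp[OF f] by (intro Bochner_Integration.integral_sum) auto
  then show ?thesis unfolding avg_def mE_def by simp
qed

lemma Cov_sym: "Cov f f a b = Cov f f b a"
  unfolding Cov_def by (simp add: mult.commute)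

lemma avg_sq_int:
  assumes f: "bb f"
  shows "(\<integral>x. (avg f n x)^2 \<partial>\<mu>) = 2 * W f f n + (\<Sum>a\<in>{1..n}. Cov f f a a) / (real n)^2 + (mE f n)^2"
proof -
  define G where "G a b = (\<integral>x. f ((S ^^ a) x) * f ((S ^^ b) x) \<partial>\<mu>)" for a b
  have sq: "(avg f n x)^2 = (\<Sum>a\<in>{1..n}. \<Sum>b\<in>{1..n}. f ((S ^^ a) x) * f ((S ^^ b) x)) / (real n)^2" for x
    unfolding avg_def power_divide by (simp add: power2_eq_square sum_product)
  have "(\<integral>x. (\<Sum>a\<in>{1..n}. \<Sum>b\<in>{1..n}. f ((S ^^ a) x) * f ((S ^^ b) x)) \<partial>\<mu>)
      = (\<Sum>a\<in>{1..n}. \<integral>x. (\<Sum>b\<in>{1..n}. f ((S ^^ a) x) * f ((S ^^ b) x)) \<partial>\<mu>)"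
    using int_comp2[OF f f] by (intro Bochner_Integration.integral_sum integrable_sum) auto
  also have "\<dots> = (\<Sum>a\<in>{1..n}. \<Sum>b\<in>{1..n}. G a b)"
    unfolding G_def using int_comp2[OF f f] by (intro sum.cong refl Bochner_Integration.integral_sum) auto
  finally have i1: "(\<integral>x. (avg f n x)^2 \<partial>\<mu>) = (\<Sum>a\<in>{1..n}. \<Sum>b\<in>{1..n}. G a b) / (real n)^2"
    unfolding sq by simp
  have Gd: "G a b = (if a < b then Cov f f a b else 0) + (if b < a then Cov f f b a else 0)
      + (if a = b then Cov f f a a else 0) + e f a * e f b" for a b
    unfolding G_def using Cov_sym[of f a b] by (auto simp: Cov_def)
  have s2: "(\<Sum>a\<in>{1..n}. \<Sum>b\<in>{1..n}. if b < a then Cov f f b a else 0)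
      = (\<Sum>a\<in>{1..n}. \<Sum>b\<in>{1..n}. if a < b then Cov f f a b else 0)"
    by (rule sum.swap)
  have s3: "(\<Sum>a\<in>{1..n}. \<Sum>b\<in>{1..n}. if a = b then Cov f f a a else 0) = (\<Sum>a\<in>{1..n}. Cov f f a a)"
    by (simp add: sum.delta)
  have s4: "(\<Sum>a\<in>{1..n}. \<Sum>b\<in>{1..n}. e f a * e f b) = (\<Sum>a\<in>{1..n}. e f a)^2"
    by (simp add: power2_eq_square sum_product)
  have "(\<Sum>a\<in>{1..n}. \<Sum>b\<in>{1..n}. G a b)
      = 2 * (\<Sum>a\<in>{1..n}. \<Sum>b\<in>{1..n}. if a < b then Cov f f a b else 0) + (\<Sum>a\<in>{1..n}. Cov f f a a)
        + (\<Sum>a\<in>{1..n}. e f a)^2"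
    unfolding Gd sum.distrib s2 s3 s4 by simp
  then show ?thesis unfolding i1 W_def mE_def
    by (simp add: add_divide_distrib power_divide)
qed

lemma avg_L2:
  assumes f: "bb f"
  shows "(\<lambda>n. \<integral>x. (avg f n x - c f)^2 \<partial>\<mu>) \<longlonglongrightarrow> 0"
proof -
  obtain B where B: "B \<ge> 0" "\<forall>x. \<bar>f x\<bar> \<le> B" using bb_bound[OF f] by blast
  have ab: "\<bar>avg f n x\<bar> \<le> B" for n x using avg_bound[OF B(2)] .
  have ia: "integrable \<mu> (avg f n)" for n
    using avg_meas[OF f] ab by (intro prob_integrable_bound[OF prob_space_axioms, where B=B]) auto
  have b2: "\<bar>(avg f n x)^2\<bar> \<le> B * B" for n x
  proof -
    have "\<bar>avg f n x\<bar> * \<bar>avg f n x\<bar> \<le> B * B" using ab by (intro mult_mono) (auto intro: order_trans[OF abs_ge_zero])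
    then show ?thesis by (simp add: power2_eq_square abs_mult)
  qed
  have i2: "integrable \<mu> (\<lambda>x. (avg f n x)^2)" for n
    using avg_meas[OF f] b2 by (intro prob_integrable_bound[OF prob_space_axioms, where B="B*B"]) auto
  have eq: "(\<integral>x. (avg f n x - c f)^2 \<partial>\<mu>)
     = 2 * W f f n + (\<Sum>a\<in>{1..n}. Cov f f a a) / (real n)^2 + (mE f n)^2 - 2 * c f * mE f n + (c f)^2" for n
  proof -
    have "(\<integral>x. (avg f n x - c f)^2 \<partial>\<mu>) = (\<integral>x. (avg f n x)^2 - 2 * c f * avg f n x + (c f)^2 \<partial>\<mu>)"
      by (rule Bochner_Integration.integral_cong) (auto simp: power2_eq_square algebra_simps)
    also have "\<dots> = (\<integral>x. (avg f n x)^2 \<partial>\<mu>) - 2 * c f * (\<integral>x. avg f n x \<partial>\<mu>) + (c f)^2"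
      using ia[of n] i2[of n] by (simp add: prob_space)
    finally show ?thesis unfolding avg_sq_int[OF f] avg_int[OF f] .
  qed
  have d: "(\<lambda>n. (\<Sum>a\<in>{1..n}. Cov f f a a) / (real n)^2) \<longlonglongrightarrow> 0"
  proof (rule Lim_null_comparison)
    show "\<forall>\<^sub>F n in sequentially. norm ((\<Sum>a\<in>{1..n}. Cov f f a a) / (real n)^2) \<le> 2 * B * B / real n"
    proof (rule eventually_sequentiallyI[of 1])
      fix n :: nat assume n: "n \<ge> 1"
      have "\<bar>\<Sum>a\<in>{1..n}. Cov f f a a\<bar> \<le> (\<Sum>a\<in>{1..n}. 2 * B * B)"
        by (rule order_trans[OF sum_abs]) (intro sum_mono Cov_bound[OF f f B(2) B(2)])
      then have "\<bar>\<Sum>a\<in>{1..n}. Cov f f a a\<bar> \<le> real n * (2 * B * B)" by simp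
      then show "norm ((\<Sum>a\<in>{1..n}. Cov f f a a) / (real n)^2) \<le> 2 * B * B / real n"
        using n by (simp add: abs_divide power2_eq_square field_simps)
    qed
    show "(\<lambda>n. 2 * B * B / real n) \<longlonglongrightarrow> 0"
      by (intro tendsto_divide_0[OF tendsto_const] filterlim_at_top_imp_at_infinity[OF filterlim_real_sequentially])
  qed
  have "(\<lambda>n. 2 * W f f n + (\<Sum>a\<in>{1..n}. Cov f f a a) / (real n)^2 + (mE f n)^2 - 2 * c f * mE f n + (c f)^2)
      \<longlonglongrightarrow> 2 * 0 + 0 + (c f)^2 - 2 * c f * c f + (c f)^2"
    using W_fun[OF f f] d stat_cesaro[OF f] unfolding mE_def[abs_def]
    by (intro tendsto_intros) auto
  then show ?thesis unfolding eq by (simp add: power2_eq_square)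
qed

lemma avg_L1:
  assumes f: "bb f"
  shows "(\<lambda>n. \<integral>x. \<bar>avg f n x - c f\<bar> \<partial>\<mu>) \<longlonglongrightarrow> 0"
proof (rule Lim_null_comparison)
  obtain B where B: "B \<ge> 0" "\<forall>x. \<bar>f x\<bar> \<le> B" using bb_bound[OF f] by blast
  show "\<forall>\<^sub>F n in sequentially. norm (\<integral>x. \<bar>avg f n x - c f\<bar> \<partial>\<mu>) \<le> sqrt (\<integral>x. (avg f n x - c f)^2 \<partial>\<mu>)"
  proof (rule always_eventually, rule allI)
    fix n
    have "\<bar>avg f n x - c f\<bar> \<le> B + \<bar>c f\<bar>" for x using avg_bound[OF B(2), of n x] by linarith
    then have "(\<integral>x. \<bar>avg f n x - c f\<bar> \<partial>\<mu>)^2 \<le> (\<integral>x. (avg f n x - c f)^2 \<partial>\<mu>)"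
      using avg_meas[OF f] by (intro prob_L1_L2[OF prob_space_axioms]) auto
    moreover have "0 \<le> (\<integral>x. \<bar>avg f n x - c f\<bar> \<partial>\<mu>)" by simp
    ultimately show "norm (\<integral>x. \<bar>avg f n x - c f\<bar> \<partial>\<mu>) \<le> sqrt (\<integral>x. (avg f n x - c f)^2 \<partial>\<mu>)"
      using real_le_rsqrt by simp
  qed
  show "(\<lambda>n. sqrt (\<integral>x. (avg f n x - c f)^2 \<partial>\<mu>)) \<longlonglongrightarrow> 0"
    using tendsto_real_sqrt[OF avg_L2[OF f]] by simp
qed

end



context chaos begin

definition Perms :: "nat \<Rightarrow> (nat \<Rightarrow> nat) set" where
  "Perms n = {\<sigma>. \<sigma> permutes {1..n}}"

definition G :: "nat \<Rightarrow> (nat \<Rightarrow> nat) \<times> 'a \<Rightarrow> (nat \<Rightarrow> 'a)" where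
  "G n = (\<lambda>(\<sigma>, x). \<lambda>j\<in>{1..n}. (S ^^ \<sigma> j) x)"

definition PM :: "nat \<Rightarrow> ((nat \<Rightarrow> nat) \<times> 'a) measure" where
  "PM n = uniform_count_measure (Perms n) \<Otimes>\<^sub>M \<mu>"

lemma Perms_fin: "finite (Perms n)"
  unfolding Perms_def by (rule finite_permutations) simp

lemma Perms_card: "card (Perms n) = fact n"
  unfolding Perms_def by (rule card_permutations) simp_all

lemma Perms_ne: "Perms n \<noteq> {}"
  unfolding Perms_def using permutes_id by blast

lemma UC_prob: "prob_space (uniform_count_measure (Perms n))"
  by (rule prob_space_uniform_count_measure[OF Perms_fin Perms_ne])

lemma PM_pair: "pair_prob_space (uniform_count_measure (Perms n)) \<mu>"
proof -
  interpret U: prob_space "uniform_count_measure (Perms n)" by (rule UC_prob)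
  show ?thesis by unfold_locales
qed

lemma PM_prob: "prob_space (PM n)"
proof -
  interpret PP: pair_prob_space "uniform_count_measure (Perms n)" \<mu> by (rule PM_pair)
  show ?thesis unfolding PM_def by (rule PP.P.prob_space_axioms)
qed

lemma G_meas: "G n \<in> measurable (PM n) (Epow n)"
proof -
  have "G n \<in> measurable (count_space (Perms n) \<Otimes>\<^sub>M \<mu>) (Epow n)"
  proof (rule measurable_pair_measure_countable1)
    show "countable (Perms n)" using Perms_fin by (rule countable_finite)
    show "(\<lambda>y. G n (\<sigma>, y)) \<in> measurable \<mu> (Epow n)" if "\<sigma> \<in> Perms n" for \<sigma>
      unfolding G_def Epow_def by (simp, intro measurable_restrict Tmeas_mu)
  qed
  moreover have "sets (PM n) = sets (count_space (Perms n) \<Otimes>\<^sub>M \<mu>)"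
    unfolding PM_def by (intro sets_pair_measure_cong sets_uniform_count_measure_count_space refl)
  ultimately show ?thesis using measurable_cong_sets[of "PM n" "count_space (Perms n) \<Otimes>\<^sub>M \<mu>" "Epow n" "Epow n"]
    by simp
qed

lemma mu_n_distr: "mu_n \<mu> S n = distr (PM n) (Epow n) (G n)"
  unfolding mu_n_def distr_def
proof (rule measure_of_eq)
  show "sets (Epow n) \<subseteq> Pow (space (Epow n))" by (rule sets.space_closed)
  fix A :: "(nat \<Rightarrow> 'a) set" assume "A \<in> sigma_sets (space (Epow n)) (sets (Epow n))"
  then have A: "A \<in> sets (Epow n)" by (simp add: sets.sigma_sets_eq)
  have GA: "G n -` A \<inter> space (PM n) \<in> sets (PM n)" using G_meas A by (rule measurable_sets)
  have sec: "Pair \<sigma> -` (G n -` A \<inter> space (PM n)) = {x \<in> space \<mu>. (\<lambda>j\<in>{1..n}. (S ^^ \<sigma> j) x) \<in> A}"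
    if "\<sigma> \<in> Perms n" for \<sigma>
    using that unfolding PM_def G_def by (auto simp: space_pair_measure space_uniform_count_measure)
  have "emeasure (PM n) (G n -` A \<inter> space (PM n))
      = (\<integral>\<^sup>+\<sigma>. emeasure \<mu> (Pair \<sigma> -` (G n -` A \<inter> space (PM n))) \<partial>uniform_count_measure (Perms n))"
    using GA unfolding PM_def by (rule emeasure_pair_measure_alt)
  also have "\<dots> = (\<Sum>\<sigma>\<in>Perms n. ennreal (1 / real (card (Perms n))) * emeasure \<mu> (Pair \<sigma> -` (G n -` A \<inter> space (PM n))))"
    unfolding uniform_count_measure_def by (rule nn_integral_point_measure_finite[OF Perms_fin])
  also have "\<dots> = (\<Sum>\<sigma>\<in>Perms n. ennreal (1 / fact n) * emeasure \<mu> {x \<in> space \<mu>. (\<lambda>j\<in>{1..n}. (S ^^ \<sigma> j) x) \<in> A})"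
  proof (rule sum.cong[OF refl])
    fix \<sigma> assume s: "\<sigma> \<in> Perms n"
    have "ennreal (1 / real (card (Perms n))) = ennreal (1 / fact n)"
      unfolding Perms_card by simp
    then show "ennreal (1 / real (card (Perms n))) * emeasure \<mu> (Pair \<sigma> -` (G n -` A \<inter> space (PM n)))
        = ennreal (1 / fact n) * emeasure \<mu> {x \<in> space \<mu>. (\<lambda>j\<in>{1..n}. (S ^^ \<sigma> j) x) \<in> A}"
      using sec[OF s] by simp
  qed
  also have "\<dots> = ennreal (1 / fact n) * (\<Sum>\<sigma>\<in>Perms n. emeasure \<mu> {x \<in> space \<mu>. (\<lambda>j\<in>{1..n}. (S ^^ \<sigma> j) x) \<in> A})"
    by (rule sum_distrib_left[symmetric])
  finally show "ennreal (1 / fact n) * (\<Sum>\<sigma>\<in>{\<sigma>. \<sigma> permutes {1..n}}. emeasure \<mu> {x \<in> space \<mu>. (\<lambda>j\<in>{1..n}. (S ^^ \<sigma> j) x) \<in> A})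
      = emeasure (PM n) (G n -` A \<inter> space (PM n))"
    unfolding Perms_def by simp
qed

lemma mu_n_sets: "sets (mu_n \<mu> S n) = sets (Epow n)"
  unfolding mu_n_distr by simp

lemma mu_n_prob: "prob_space (mu_n \<mu> S n)"
  unfolding mu_n_distr by (rule prob_space.prob_space_distr[OF PM_prob G_meas])

lemma mu_n_int:
  fixes g :: "(nat \<Rightarrow> 'a) \<Rightarrow> real"
  assumes gm: "g \<in> borel_measurable (Epow n)" and gb: "\<forall>y. \<bar>g y\<bar> \<le> B"
  shows "(\<integral>y. g y \<partial>mu_n \<mu> S n) = (\<Sum>\<sigma>\<in>Perms n. \<integral>x. g (\<lambda>j\<in>{1..n}. (S ^^ \<sigma> j) x) \<partial>\<mu>) / fact n"
proof -
  interpret PP: pair_prob_space "uniform_count_measure (Perms n)" \<mu> by (rule PM_pair)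
  have gGm: "(\<lambda>z. g (G n z)) \<in> borel_measurable (PM n)" using measurable_compose[OF G_meas gm] .
  have int: "integrable (PM n) (\<lambda>z. g (G n z))"
    using gGm gb by (intro prob_integrable_bound[OF PM_prob, where B=B]) auto
  have "(\<integral>y. g y \<partial>mu_n \<mu> S n) = (\<integral>z. g (G n z) \<partial>PM n)"
    unfolding mu_n_distr by (rule integral_distr[OF G_meas gm])
  also have "\<dots> = (\<integral>\<sigma>. (\<integral>x. g (G n (\<sigma>, x)) \<partial>\<mu>) \<partial>uniform_count_measure (Perms n))"
    using int unfolding PM_def by (rule PP.integral_fst'[symmetric])
  also have "\<dots> = (\<Sum>\<sigma>\<in>Perms n. \<integral>x. g (G n (\<sigma>, x)) \<partial>\<mu>) / card (Perms n)"
    by (rule integral_uniform_count_measure[OF Perms_fin])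
  finally show ?thesis unfolding Perms_card G_def by simp
qed

end



lemma bcont_bb: "bcont f \<Longrightarrow> bb f"
  unfolding bcont_def bb_def bounded_iff by (auto intro: borel_measurable_continuous_onI)

lemma prod_abs_bound:
  fixes f :: "nat \<Rightarrow> real"
  assumes "\<And>i. i \<in> I \<Longrightarrow> \<bar>f i\<bar> \<le> B i"
  shows "\<bar>\<Prod>i\<in>I. f i\<bar> \<le> (\<Prod>i\<in>I. B i)"
  unfolding abs_prod using assms by (intro prod_mono) auto

context chaos begin

lemma meas_E: "j \<in> {1..n} \<Longrightarrow> f \<in> borel_measurable borel \<Longrightarrow> (\<lambda>y. f (y j)) \<in> borel_measurable (Epow n)"
  unfolding Epow_def by (rule measurable_compose[OF measurable_component_singleton]) auto

lemma meas_mu_n: "g \<in> borel_measurable (Epow n) \<Longrightarrow> g \<in> borel_measurable (mu_n \<mu> S n)"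
proof -
  assume "g \<in> borel_measurable (Epow n)"
  moreover have "measurable (mu_n \<mu> S n) (borel :: 'b::topological_space measure) = measurable (Epow n) borel"
    by (rule measurable_cong_sets[OF mu_n_sets refl])
  ultimately show ?thesis by simp
qed

lemma mu_n_abs_bound: fixes g :: "(nat \<Rightarrow> 'a) \<Rightarrow> real" shows "g \<in> borel_measurable (Epow n) \<Longrightarrow> \<forall>y. \<bar>g y\<bar> \<le> B \<Longrightarrow> \<bar>\<integral>y. g y \<partial>mu_n \<mu> S n\<bar> \<le> B"
  by (rule prob_abs_integral_bound[OF mu_n_prob meas_mu_n]) assumption+

lemma mu_n_integrable: fixes g :: "(nat \<Rightarrow> 'a) \<Rightarrow> real" shows "g \<in> borel_measurable (Epow n) \<Longrightarrow> \<forall>y. \<bar>g y\<bar> \<le> B \<Longrightarrow> integrable (mu_n \<mu> S n) g"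
  by (rule prob_integrable_bound[OF mu_n_prob meas_mu_n]) assumption+

lemma mu_n_perm:
  fixes g :: "(nat \<Rightarrow> 'a) \<Rightarrow> real"
  assumes gm: "g \<in> borel_measurable (Epow n)" and gb: "\<forall>y. \<bar>g y\<bar> \<le> B" and \<pi>: "\<pi> permutes {1..n}"
  shows "(\<integral>y. g (\<lambda>j\<in>{1..n}. y (\<pi> j)) \<partial>mu_n \<mu> S n) = (\<integral>y. g y \<partial>mu_n \<mu> S n)"
proof -
  have pim: "\<pi> j \<in> {1..n}" if "j \<in> {1..n}" for j using permutes_in_image[OF \<pi>] that by simp
  have pm: "(\<lambda>y. \<lambda>j\<in>{1..n}. y (\<pi> j)) \<in> measurable (Epow n) (Epow n :: (nat \<Rightarrow> 'a) measure)"
    unfolding Epow_def by (intro measurable_restrict measurable_component_singleton pim)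
  have g'm: "(\<lambda>y. g (\<lambda>j\<in>{1..n}. y (\<pi> j))) \<in> borel_measurable (Epow n)"
    using measurable_compose[OF pm gm] .
  have inner: "(\<lambda>j\<in>{1..n}. (\<lambda>j\<in>{1..n}. (S ^^ \<sigma> j) x) (\<pi> j)) = (\<lambda>j\<in>{1..n}. (S ^^ (\<sigma> \<circ> \<pi>) j) x)" for \<sigma> x
    using pim by (auto simp: restrict_def)
  have "(\<integral>y. g (\<lambda>j\<in>{1..n}. y (\<pi> j)) \<partial>mu_n \<mu> S n)
      = (\<Sum>\<sigma>\<in>Perms n. \<integral>x. g (\<lambda>j\<in>{1..n}. (S ^^ (\<sigma> \<circ> \<pi>) j) x) \<partial>\<mu>) / fact n"
    using mu_n_int[OF g'm, of B] gb inner by simp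
  also have "(\<Sum>\<sigma>\<in>Perms n. \<integral>x. g (\<lambda>j\<in>{1..n}. (S ^^ (\<sigma> \<circ> \<pi>) j) x) \<partial>\<mu>)
      = (\<Sum>\<sigma>\<in>Perms n. \<integral>x. g (\<lambda>j\<in>{1..n}. (S ^^ \<sigma> j) x) \<partial>\<mu>)"
    unfolding Perms_def by (rule sum_permutations_compose_right[OF \<pi>, symmetric])
  also have "\<dots> / fact n = (\<integral>y. g y \<partial>mu_n \<mu> S n)"
    using mu_n_int[OF gm gb] by simp
  finally show ?thesis .
qed

lemma mu_n_symmetric: "symmetric_meas n (mu_n \<mu> S n)"
  unfolding symmetric_meas_def
proof (intro conjI mu_n_sets mu_n_prob allI impI)
  fix \<phi> :: "nat \<Rightarrow> 'a \<Rightarrow> real" and \<pi> assume a: "(\<forall>i. bcont (\<phi> i)) \<and> \<pi> permutes {1..n}"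
  then have bbi: "bb (\<phi> i)" for i using bcont_bb by blast
  have "\<exists>B. \<forall>x. \<bar>\<phi> i x\<bar> \<le> B" for i using bbi[of i] unfolding bb_def by blast
  then obtain B where B: "\<And>i x. \<bar>\<phi> i x\<bar> \<le> B i" by metis
  define g where "g y = (\<Prod>i\<in>{1..n}. \<phi> i (y i))" for y :: "nat \<Rightarrow> 'a"
  have gm: "g \<in> borel_measurable (Epow n)"
    unfolding g_def[abs_def] using bbi unfolding bb_def by (intro borel_measurable_prod meas_E) auto
  have gb: "\<forall>y. \<bar>g y\<bar> \<le> (\<Prod>i\<in>{1..n}. B i)" unfolding g_def using B by (auto intro: prod_abs_bound)
  have "g (\<lambda>j\<in>{1..n}. y (\<pi> j)) = (\<Prod>i\<in>{1..n}. \<phi> i (y (\<pi> i)))" for y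
    unfolding g_def by (intro prod.cong) auto
  then show "(\<integral>x. (\<Prod>i\<in>{1..n}. \<phi> i (x i)) \<partial>mu_n \<mu> S n) = (\<integral>x. (\<Prod>i\<in>{1..n}. \<phi> i (x (\<pi> i))) \<partial>mu_n \<mu> S n)"
    using mu_n_perm[OF gm gb, of \<pi>] a unfolding g_def by simp
qed

end



lemma prob_mult_bound:
  fixes f h :: "'b \<Rightarrow> real"
  assumes M: "prob_space M" and fm: "f \<in> borel_measurable M" and hm: "h \<in> borel_measurable M"
    and fb: "\<forall>x. \<bar>f x\<bar> \<le> Bf" and hb: "\<forall>x. \<bar>h x\<bar> \<le> Bh"
  shows "\<bar>\<integral>x. f x * h x \<partial>M\<bar> \<le> Bf * (\<integral>x. \<bar>h x\<bar> \<partial>M)"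
proof -
  interpret prob_space M by fact
  have Bf: "Bf \<ge> 0" using fb abs_ge_zero order_trans by blast
  have b2: "\<bar>f x * h x\<bar> \<le> Bf * Bh" for x
    unfolding abs_mult using fb hb Bf by (intro mult_mono) auto
  have "\<bar>\<integral>x. f x * h x \<partial>M\<bar> \<le> (\<integral>x. \<bar>f x * h x\<bar> \<partial>M)"
    using integral_norm_bound[of M "\<lambda>x. f x * h x"] by simp
  also have "\<dots> \<le> (\<integral>x. Bf * \<bar>h x\<bar> \<partial>M)"
  proof (rule integral_mono)
    show "integrable M (\<lambda>x. \<bar>f x * h x\<bar>)" using fm hm b2 by (intro integrable_const_bound[where B="Bf*Bh"]) auto
    show "integrable M (\<lambda>x. Bf * \<bar>h x\<bar>)" using hm hb by (intro integrable_mult_right integrable_const_bound[where B=Bh]) auto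
    show "\<bar>f x * h x\<bar> \<le> Bf * \<bar>h x\<bar>" for x unfolding abs_mult using fb by (intro mult_right_mono) auto
  qed
  also have "\<dots> = Bf * (\<integral>x. \<bar>h x\<bar> \<partial>M)" by simp
  finally show ?thesis .
qed

context chaos begin

lemma chaos_lim:
  fixes \<phi> :: "nat \<Rightarrow> 'a \<Rightarrow> real"
  assumes bbp: "\<And>j. bb (\<phi> j)"
  shows "(\<lambda>n. \<integral>y. (\<Prod>j\<in>{1..k}. \<phi> j (y j)) \<partial>mu_n \<mu> S n) \<longlonglongrightarrow> (\<Prod>j\<in>{1..k}. c (\<phi> j))"
proof (induction k)
  case 0
  have "(\<integral>y. 1 \<partial>mu_n \<mu> S n) = (1::real)" for n using prob_space.prob_space[OF mu_n_prob, of n] by simp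
  then show ?case by simp
next
  case (Suc k)
  have "\<exists>B\<ge>0. \<forall>x. \<bar>\<phi> j x\<bar> \<le> B" for j using bb_bound[OF bbp[of j]] .
  then obtain B where B0: "\<And>j. B j \<ge> 0" and B: "\<And>j x. \<bar>\<phi> j x\<bar> \<le> B j" by metis
  have pm: "\<phi> j \<in> borel_measurable borel" for j using bbp[of j] unfolding bb_def by blast
  define \<psi> where "\<psi> = \<phi> (Suc k)"
  define Bp where "Bp = (\<Prod>j\<in>{1..k}. B j)"
  define B\<psi> where "B\<psi> = B (Suc k)"
  have Bp0: "Bp \<ge> 0" unfolding Bp_def using B0 by (intro prod_nonneg) auto
  have Bq0: "B\<psi> \<ge> 0" unfolding B\<psi>_def using B0 by simp
  have bpsi: "bb \<psi>" unfolding \<psi>_def by (rule bbp)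
  have qb: "\<bar>\<psi> x\<bar> \<le> B\<psi>" for x unfolding \<psi>_def B\<psi>_def by (rule B)
  define Pk where "Pk y = (\<Prod>j\<in>{1..k}. \<phi> j (y j))" for y :: "nat \<Rightarrow> 'a"
  have Pkb: "\<bar>Pk y\<bar> \<le> Bp" for y unfolding Pk_def Bp_def by (rule prod_abs_bound) (rule B)
  have Pkm: "n \<ge> k \<Longrightarrow> Pk \<in> borel_measurable (Epow n)" for n
    unfolding Pk_def[abs_def] by (intro borel_measurable_prod meas_E pm) auto
  have qm: "i \<in> {1..n} \<Longrightarrow> (\<lambda>y. \<psi> (y i)) \<in> borel_measurable (Epow n)" for i n
    unfolding \<psi>_def by (intro meas_E pm)
  define I where "I n = (\<integral>y. Pk y * \<psi> (y (Suc k)) \<partial>mu_n \<mu> S n)" for n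
  define K where "K n = (\<integral>y. Pk y \<partial>mu_n \<mu> S n)" for n
  define AvgY where "AvgY n y = (\<Sum>i\<in>{1..n}. \<psi> (y i)) / real n" for n and y :: "nat \<Rightarrow> 'a"
  define J where "J n = (\<integral>y. Pk y * AvgY n y \<partial>mu_n \<mu> S n)" for n
  define L1 where "L1 n = (\<integral>x. \<bar>avg \<psi> n x - c \<psi>\<bar> \<partial>\<mu>)" for n
  have L1lim: "L1 \<longlonglongrightarrow> 0" unfolding L1_def[abs_def] by (rule avg_L1[OF bpsi])
  have Klim: "K \<longlonglongrightarrow> (\<Prod>j\<in>{1..k}. c (\<phi> j))" unfolding K_def[abs_def] Pk_def using Suc .
  have Ieq: "(\<integral>y. (\<Prod>j\<in>{1..Suc k}. \<phi> j (y j)) \<partial>mu_n \<mu> S n) = I n" for n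
  proof -
    have "(\<Prod>j\<in>{1..Suc k}. \<phi> j (y j)) = Pk y * \<psi> (y (Suc k))" for y
      unfolding Pk_def \<psi>_def by (simp add: atLeastAtMostSuc_conv mult.commute)
    then show ?thesis unfolding I_def by simp
  qed
  have Isym: "(\<integral>y. Pk y * \<psi> (y i) \<partial>mu_n \<mu> S n) = I n" if n: "Suc k \<le> n" and i: "i \<in> {Suc k..n}" for n i
  proof -
    define g where "g y = Pk y * \<psi> (y (Suc k))" for y
    define \<pi> where "\<pi> = Transposition.transpose (Suc k) i"
    have \<pi>: "\<pi> permutes {1..n}" unfolding \<pi>_def using n i by (intro permutes_swap_id) auto
    have gm: "g \<in> borel_measurable (Epow n)" unfolding g_def[abs_def] using n
      by (intro borel_measurable_times Pkm qm) auto
    have gb: "\<forall>y. \<bar>g y\<bar> \<le> Bp * B\<psi>" unfolding g_def abs_mult using Pkb qb Bp0 by (intro allI mult_mono) auto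
    have "g (\<lambda>j\<in>{1..n}. y (\<pi> j)) = Pk y * \<psi> (y i)" for y
    proof -
      have "Pk (\<lambda>j\<in>{1..n}. y (\<pi> j)) = Pk y" unfolding Pk_def
      proof (rule prod.cong[OF refl])
        fix j assume j: "j \<in> {1..k}"
        then have "\<pi> j = j" unfolding \<pi>_def using i by (auto simp: transpose_def)
        then show "\<phi> j ((\<lambda>j\<in>{1..n}. y (\<pi> j)) j) = \<phi> j (y j)" using j n by simp
      qed
      moreover have "(\<lambda>j\<in>{1..n}. y (\<pi> j)) (Suc k) = y i" unfolding \<pi>_def using n by simp
      ultimately show ?thesis unfolding g_def by simp
    qed
    then show ?thesis using mu_n_perm[OF gm gb \<pi>] unfolding g_def I_def by simp
  qed
  define R where "R n = (\<Sum>i\<in>{1..k}. \<integral>y. Pk y * \<psi> (y i) \<partial>mu_n \<mu> S n)" for n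
  have IJ: "\<bar>I n - J n\<bar> \<le> 2 * real k * Bp * B\<psi> / real n" if n: "Suc k \<le> n" for n
  proof -
    have npos: "real n > 0" using n by simp
    have intg: "integrable (mu_n \<mu> S n) (\<lambda>y. Pk y * \<psi> (y i))" if "i \<in> {1..n}" for i
      using that n by (intro mu_n_integrable[where B="Bp * B\<psi>"] borel_measurable_times Pkm qm)
        (auto simp: abs_mult intro!: mult_mono Pkb qb Bp0)
    have "real n * J n = (\<integral>y. (\<Sum>i\<in>{1..n}. Pk y * \<psi> (y i)) \<partial>mu_n \<mu> S n)"
      unfolding J_def AvgY_def using npos by (simp add: sum_distrib_left)
    also have "\<dots> = (\<Sum>i\<in>{1..n}. \<integral>y. Pk y * \<psi> (y i) \<partial>mu_n \<mu> S n)"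
      using intg by (intro Bochner_Integration.integral_sum) auto
    also have "\<dots> = R n + (\<Sum>i\<in>{Suc k..n}. \<integral>y. Pk y * \<psi> (y i) \<partial>mu_n \<mu> S n)"
    proof -
      have "{1..n} = {1..k} \<union> {Suc k..n}" using n by auto
      then show ?thesis unfolding R_def by (simp add: sum.union_disjoint)
    qed
    also have "(\<Sum>i\<in>{Suc k..n}. \<integral>y. Pk y * \<psi> (y i) \<partial>mu_n \<mu> S n) = (\<Sum>i\<in>{Suc k..n}. I n)"
      using Isym[OF n] by simp
    also have "\<dots> = (real n - real k) * I n" using n by (simp add: of_nat_diff)
    finally have eq: "real n * J n = R n + (real n - real k) * I n" .
    have Ib: "\<bar>I n\<bar> \<le> Bp * B\<psi>" unfolding I_def using n
      by (intro mu_n_abs_bound borel_measurable_times Pkm qm) (auto simp: abs_mult intro!: mult_mono Pkb qb Bp0)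
    have Rb: "\<bar>R n\<bar> \<le> real k * (Bp * B\<psi>)"
    proof -
      have "\<bar>R n\<bar> \<le> (\<Sum>i\<in>{1..k}. Bp * B\<psi>)" unfolding R_def using n
        by (intro order_trans[OF sum_abs] sum_mono mu_n_abs_bound borel_measurable_times Pkm qm)
          (auto simp: abs_mult intro!: mult_mono Pkb qb Bp0)
      then show ?thesis by simp
    qed
    have "I n - J n = (real k * I n - R n) / real n" using eq npos by (simp add: field_simps)
    moreover have "\<bar>real k * I n - R n\<bar> \<le> 2 * real k * Bp * B\<psi>"
    proof -
      have "\<bar>real k * I n\<bar> \<le> real k * (Bp * B\<psi>)" unfolding abs_mult abs_of_nat using Ib by (intro mult_left_mono) auto
      then show ?thesis using Rb by (simp add: algebra_simps)
    qed
    ultimately show ?thesis using npos by (simp add: abs_divide divide_right_mono)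
  qed
  have JK: "\<bar>J n - c \<psi> * K n\<bar> \<le> Bp * L1 n" if n: "Suc k \<le> n" for n
  proof -
    have npos: "real n > 0" using n by simp
    have Am: "AvgY n \<in> borel_measurable (Epow n)" unfolding AvgY_def[abs_def]
      by (intro borel_measurable_divide borel_measurable_sum qm) auto
    have Ab: "\<bar>AvgY n y\<bar> \<le> B\<psi>" for y
    proof -
      have "\<bar>\<Sum>i\<in>{1..n}. \<psi> (y i)\<bar> \<le> (\<Sum>i\<in>{1..n}. B\<psi>)" by (intro order_trans[OF sum_abs] sum_mono qb)
      then show ?thesis unfolding AvgY_def using npos by (simp add: abs_divide field_simps)
    qed
    have Dm: "(\<lambda>y. AvgY n y - c \<psi>) \<in> borel_measurable (Epow n)" using Am by simp
    have Db: "\<bar>AvgY n y - c \<psi>\<bar> \<le> B\<psi> + \<bar>c \<psi>\<bar>" for y using Ab[of y] by linarith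
    have iP: "integrable (mu_n \<mu> S n) Pk" using Pkm n Pkb by (intro mu_n_integrable[where B=Bp]) auto
    have iPA: "integrable (mu_n \<mu> S n) (\<lambda>y. Pk y * AvgY n y)" using Pkm n Am Pkb Ab Bp0
      by (intro mu_n_integrable[where B="Bp * B\<psi>"] borel_measurable_times) (auto simp: abs_mult intro!: mult_mono)
    have "J n - c \<psi> * K n = (\<integral>y. Pk y * (AvgY n y - c \<psi>) \<partial>mu_n \<mu> S n)"
      unfolding J_def K_def using iP iPA by (simp add: right_diff_distrib)
    also have "\<bar>\<dots>\<bar> \<le> Bp * (\<integral>y. \<bar>AvgY n y - c \<psi>\<bar> \<partial>mu_n \<mu> S n)"
      using n by (intro prob_mult_bound[OF mu_n_prob, where Bh="B\<psi> + \<bar>c \<psi>\<bar>"] meas_mu_n Pkm Dm) (auto intro: Pkb Db)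
    also have "(\<integral>y. \<bar>AvgY n y - c \<psi>\<bar> \<partial>mu_n \<mu> S n) = L1 n"
    proof -
      have Dam: "(\<lambda>y. \<bar>AvgY n y - c \<psi>\<bar>) \<in> borel_measurable (Epow n)" using Dm by simp
      have Dab: "\<forall>y. \<bar>\<bar>AvgY n y - c \<psi>\<bar>\<bar> \<le> B\<psi> + \<bar>c \<psi>\<bar>" using Db by simp
      have "AvgY n (\<lambda>j\<in>{1..n}. (S ^^ \<sigma> j) x) = avg \<psi> n x" if "\<sigma> \<in> Perms n" for \<sigma> x
      proof -
        have sp: "\<sigma> permutes {1..n}" using that unfolding Perms_def by simp
        have "(\<Sum>i\<in>{1..n}. \<psi> ((\<lambda>j\<in>{1..n}. (S ^^ \<sigma> j) x) i)) = (\<Sum>i\<in>{1..n}. \<psi> ((S ^^ \<sigma> i) x))" by simp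
        also have "\<dots> = (\<Sum>a\<in>{1..n}. \<psi> ((S ^^ a) x))"
          by (rule sum.reindex_bij_betw[OF permutes_imp_bij[OF sp], where g="\<lambda>a. \<psi> ((S ^^ a) x)"])
        finally show ?thesis unfolding AvgY_def avg_def by simp
      qed
      then have "(\<Sum>\<sigma>\<in>Perms n. \<integral>x. \<bar>AvgY n (\<lambda>j\<in>{1..n}. (S ^^ \<sigma> j) x) - c \<psi>\<bar> \<partial>\<mu>) = (\<Sum>\<sigma>\<in>Perms n. L1 n)"
        unfolding L1_def by (intro sum.cong refl) simp
      also have "\<dots> = fact n * L1 n" using Perms_card by simp
      finally show ?thesis using mu_n_int[OF Dam Dab] by simp
    qed
    finally show ?thesis .
  qed
  define E where "E n = I n - c \<psi> * K n" for n
  have "E \<longlonglongrightarrow> 0"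
  proof (rule Lim_null_comparison)
    show "\<forall>\<^sub>F n in sequentially. norm (E n) \<le> Bp * L1 n + 2 * real k * Bp * B\<psi> / real n"
    proof (rule eventually_sequentiallyI[of "Suc k"])
      fix n assume n: "Suc k \<le> n"
      show "norm (E n) \<le> Bp * L1 n + 2 * real k * Bp * B\<psi> / real n"
        using IJ[OF n] JK[OF n] unfolding E_def real_norm_def by linarith
    qed
    have "(\<lambda>n. 2 * real k * Bp * B\<psi> / real n) \<longlonglongrightarrow> 0"
      by (intro tendsto_divide_0[OF tendsto_const] filterlim_at_top_imp_at_infinity[OF filterlim_real_sequentially])
    then show "(\<lambda>n. Bp * L1 n + 2 * real k * Bp * B\<psi> / real n) \<longlonglongrightarrow> 0"
      using tendsto_add[OF tendsto_mult_right_zero[OF L1lim, of Bp]] by simp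
  qed
  then have "(\<lambda>n. E n + c \<psi> * K n) \<longlonglongrightarrow> 0 + c \<psi> * (\<Prod>j\<in>{1..k}. c (\<phi> j))"
    by (intro tendsto_intros Klim)
  then have lim: "I \<longlonglongrightarrow> c \<psi> * (\<Prod>j\<in>{1..k}. c (\<phi> j))" unfolding E_def by simp
  have pe: "(\<Prod>j\<in>{1..Suc k}. c (\<phi> j)) = c \<psi> * (\<Prod>j\<in>{1..k}. c (\<phi> j))"
    unfolding \<psi>_def by (simp add: atLeastAtMostSuc_conv)
  show ?case unfolding Ieq pe by (rule lim)
qed

end


theorem corollary2p3:
  fixes \<mu> \<nu> :: "'a::{metric_space, second_countable_topology} measure"
    and S :: "'a \<Rightarrow> 'a"
    and P :: "'a set set"
  assumes "prob_space \<mu>"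
    and "sets \<mu> = sets borel"
    and "S \<in> borel_measurable borel"
    and "Int_stable P"
    and "P \<subseteq> sets borel"
    and "sigma_sets UNIV P = sets borel"
    and "\<forall>A\<in>P. \<forall>B\<in>P.
           (\<lambda>k. SUP i\<in>{1::nat..}.
              \<bar>measure \<mu> ((S ^^ i) -` A \<inter> (S ^^ k) -` ((S ^^ i) -` B))
               - measure \<mu> ((S ^^ i) -` A) * measure \<mu> ((S ^^ k) -` ((S ^^ i) -` B))\<bar>)
           \<longlonglongrightarrow> 0"
    and "asymptotically_stationary \<mu> S \<nu>"
  shows "chaotic (mu_n \<mu> S) \<nu>"
proof -
  have ch: "chaos \<mu> S \<nu> P" unfolding chaos_def chaos_axioms_def using assms by blast
  interpret chaos \<mu> S \<nu> P by (rule ch)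
  show ?thesis unfolding chaotic_def
  proof (intro conjI allI impI)
    fix n :: nat show "symmetric_meas n (mu_n \<mu> S n)" by (rule mu_n_symmetric)
  next
    fix k :: nat and \<phi> :: "nat \<Rightarrow> 'a \<Rightarrow> real"
    assume "\<forall>j. bcont (\<phi> j)"
    then have "\<And>j. bb (\<phi> j)" using bcont_bb by blast
    from chaos_lim[OF this, where k=k]
    show "(\<lambda>n. \<integral>x. (\<Prod>j\<in>{1..k}. \<phi> j (x j)) \<partial>mu_n \<mu> S n) \<longlonglongrightarrow> (\<Prod>j\<in>{1..k}. \<integral>y. \<phi> j y \<partial>\<nu>)"
      unfolding c_def by simp
  qed
qed

end
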